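(* The uniform coherence of formation $C_f^{\mathcal U}$ has the following properties. (a) It is convex and a strong monotone under PIO: for every state $\rho$ and every PIO $\Lambda(X)=\sum_{\alpha,\beta}p_\alpha U_{\alpha,\beta}\Pi_{\beta|\alpha}X\Pi_{\beta|\alpha}U^\dagger_{\alpha,\beta}$, \[ C_f^{\mathcal U}(\Lambda(\rho))\le\sum_{\alpha,\beta}p_\alpha q_{\beta|\alpha}C_f^{\mathcal U}(\tilde\rho_{\beta|\alpha})\le C_f^{\mathcal U}(\rho), \] where $q_{\beta|\alpha}=\mathrm{Tr}[\rho\Pi_{\beta|\alpha}]$ and $\tilde\rho_{\beta|\alpha}=q_{\beta|\alpha}^{-1}U_{\alpha,\beta}\Pi_{\beta|\alpha}\rho\Pi_{\beta|\alpha}U_{\alpha,\beta}^\dagger$. (b) It is superadditive: $C_f^{\mathcal U}(\rho_{AB})\ge C_f^{\mathcal U}(\rho_A)+C_f^{\mathcal U}(\rho_B)$ for all bipartite states $\rho_{AB}$, with $\rho_A=\mathrm{Tr}_B\rho_{AB}$, $\rho_B=\mathrm{Tr}_A\rho_{AB}$. (c) It is fully additive on tensor products: $C_f^{\mathcal U}(\rho_A\otimes\sigma_B)=C_f^{\mathcal U}(\rho_A)+C_f^{\mathcal U}(\sigma_B)$ for all states $\rho_A,\sigma_B$. (d) It is lower semicontinuous.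
   Context: Fixed computational basis $\{|i\rangle\}_{i=1}^d$; for bipartite systems the computational basis is the product basis $\{|ij\rangle\}$. Logs base 2. $\mathcal U_k$ is the set of uniformly coherent states $|\Psi\rangle=k^{-1/2}\sum_{j\in J}e^{i\theta_j}|j\rangle$, $|J|=k$, $\theta_j\in\mathbb R$. The uniform coherence of formation is $C_f^{\mathcal U}(\rho)=\inf\{\sum_\alpha p_\alpha\log k_\alpha:\rho=\sum_\alpha p_\alpha|\Psi_\alpha\rangle\langle\Psi_\alpha|,\ |\Psi_\alpha\rangle\in\mathcal U_{k_\alpha}\}$ (finite decompositions), equal to $+\infty$ if no such decomposition exists. Incoherent unitaries are products of a permutation matrix and a diagonal unitary; incoherent projectors are $\Pi_I=\sum_{i\in I}|i\rangle\langle i|$. A PIO is a channel of the displayed form with $p$ a probability distribution, $U_{\alpha,\beta}$ incoherent unitaries and, for each $\alpha$, $\{\Pi_{\beta|\alpha}\}_\beta$ incoherent projectors summing to the identity (terms with $q_{\beta|\alpha}=0$ are omitted from the middle sum). *)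

theory Defs
  imports "HOL-Analysis.Analysis"
begin

text \<open>Operators on a finite-dimensional Hilbert space whose computational basis is
  indexed by the finite type 'n: matrices of type complex^'n^'n.\<close>

definition adj :: "complex^'n^'n \<Rightarrow> complex^'n^'n" where
  "adj A = (\<chi> i j. cnj (A $ j $ i))"

definition outer :: "complex^'n \<Rightarrow> complex^'n^'n" where
  "outer v = (\<chi> i j. v $ i * cnj (v $ j))"

definition is_state :: "complex^'n^'n \<Rightarrow> bool" where
  "is_state \<rho> \<longleftrightarrow> adj \<rho> = \<rho> \<and> trace \<rho> = 1 \<and>
     (\<forall>v::complex^'n. Im (\<Sum>i\<in>UNIV. \<Sum>j\<in>UNIV. cnj (v $ i) * \<rho> $ i $ j * v $ j) = 0
                  \<and> 0 \<le> Re (\<Sum>i\<in>UNIV. \<Sum>j\<in>UNIV. cnj (v $ i) * \<rho> $ i $ j * v $ j))"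

definition unif_coh :: "nat \<Rightarrow> complex^'n \<Rightarrow> bool" where
  "unif_coh k \<psi> \<longleftrightarrow> (\<exists>(J::'n set) (\<theta>::'n \<Rightarrow> real). J \<noteq> {} \<and> card J = k \<and>
      \<psi> = (\<chi> j. if j \<in> J then cis (\<theta> j) / complex_of_real (sqrt (real k)) else 0))"

text \<open>Uniform coherence of formation (value in [0, \<infinity>]; Inf of the empty set is \<infinity>).\<close>
definition uc_decomp :: "complex^'n^'n \<Rightarrow> nat \<Rightarrow> (nat \<Rightarrow> real) \<Rightarrow> (nat \<Rightarrow> complex^'n) \<Rightarrow> (nat \<Rightarrow> nat) \<Rightarrow> bool" where
  "uc_decomp \<rho> n p \<psi> k \<longleftrightarrow>
     (\<forall>a<n. 0 \<le> p a \<and> unif_coh (k a) (\<psi> a)) \<and> sum p {..<n} = 1 \<and>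
     \<rho> = (\<Sum>a<n. p a *\<^sub>R outer (\<psi> a))"

definition CfU :: "complex^'n^'n \<Rightarrow> ennreal" where
  "CfU \<rho> = Inf {ennreal (\<Sum>a<n. p a * log 2 (real (k a))) | n p \<psi> k. uc_decomp \<rho> n p \<psi> k}"

definition incoh_proj :: "'n set \<Rightarrow> complex^'n^'n" where
  "incoh_proj I = (\<chi> i j. if i = j \<and> i \<in> I then 1 else 0)"

definition incoh_unitary :: "complex^'n^'n \<Rightarrow> bool" where
  "incoh_unitary U \<longleftrightarrow> (\<exists>\<sigma> (\<phi>::'n \<Rightarrow> real). \<sigma> permutes UNIV \<and>
      U = (\<chi> i j. if i = \<sigma> j then cis (\<phi> j) else 0))"

definition tensor :: "complex^'a::finite^'a \<Rightarrow> complex^'b::finite^'b \<Rightarrow> complex^('a\<times>'b)^('a\<times>'b)" where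
  "tensor A B = (\<chi> x y. A $ fst x $ fst y * B $ snd x $ snd y)"

definition ptrace_B :: "complex^('a::finite\<times>'b::finite)^('a\<times>'b) \<Rightarrow> complex^'a^'a" where
  "ptrace_B R = (\<chi> i k. \<Sum>j\<in>(UNIV::'b set). R $ (i, j) $ (k, j))"

definition ptrace_A :: "complex^('a::finite\<times>'b::finite)^('a\<times>'b) \<Rightarrow> complex^'b^'b" where
  "ptrace_A R = (\<chi> j l. \<Sum>i\<in>(UNIV::'a set). R $ (i, j) $ (i, l))"

end

theory Submission
  imports Defs
begin


definition supp :: "complex^'n \<Rightarrow> 'n set" where "supp v = {i. v $ i \<noteq> 0}"

lemma unif_coh_supp:
  assumes "unif_coh k \<psi>"
  shows "k = card (supp \<psi>)" "supp \<psi> \<noteq> {}" "k \<ge> 1"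
proof -
  obtain J \<theta> where J: "J \<noteq> {}" "card J = k"
    "\<psi> = (\<chi> j. if j \<in> J then cis (\<theta> j) / complex_of_real (sqrt (real k)) else 0)"
    using assms unfolding unif_coh_def by blast
  have "k \<ge> 1" using J(1,2) by (metis One_nat_def Suc_leI card_gt_0_iff finite)
  then have "sqrt (real k) \<noteq> 0" by simp
  then have "supp \<psi> = J" using J(3) by (auto simp: supp_def)
  then show "k = card (supp \<psi>)" "supp \<psi> \<noteq> {}" "k \<ge> 1" using J `k \<ge> 1` by auto
qed

definition gdec :: "complex^'n^'n \<Rightarrow> 'i set \<Rightarrow> ('i \<Rightarrow> real) \<Rightarrow> ('i \<Rightarrow> complex^'n) \<Rightarrow> ('i \<Rightarrow> nat) \<Rightarrow> bool" where
 "gdec \<rho> I p \<psi> k \<longleftrightarrow> finite I \<and> (\<forall>a\<in>I. 0 \<le> p a \<and> unif_coh (k a) (\<psi> a)) \<and> sum p I = 1 \<and>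
     \<rho> = (\<Sum>a\<in>I. p a *\<^sub>R outer (\<psi> a))"

definition gcost :: "'i set \<Rightarrow> ('i \<Rightarrow> real) \<Rightarrow> ('i \<Rightarrow> nat) \<Rightarrow> real" where
  "gcost I p k = (\<Sum>a\<in>I. p a * log 2 (real (k a)))"

lemma gcost_nonneg: "gdec \<rho> I p \<psi> k \<Longrightarrow> 0 \<le> gcost I p k"
  unfolding gcost_def gdec_def
  by (intro sum_nonneg) (auto dest!: unif_coh_supp(3))

lemma gdec_CfU:
  assumes "gdec \<rho> I p \<psi> k"
  shows "CfU \<rho> \<le> ennreal (gcost I p k)"
proof -
  have fin: "finite I" using assms by (simp add: gdec_def)
  obtain h where h: "bij_betw h {0..<card I} I" using ex_bij_betw_nat_finite[OF fin] by blast
  have e: "\<And>g::_\<Rightarrow>'z::comm_monoid_add. (\<Sum>a<card I. g (h a)) = sum g I"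
    using sum.reindex_bij_betw[OF h] by (simp add: lessThan_atLeast0)
  have h2: "\<And>a. a < card I \<Longrightarrow> h a \<in> I" using h by (auto simp: bij_betw_def)
  have "uc_decomp \<rho> (card I) (p \<circ> h) (\<psi> \<circ> h) (k \<circ> h)"
    using assms h2 unfolding uc_decomp_def gdec_def
    by (auto simp: e[of "\<lambda>a. p a *\<^sub>R outer (\<psi> a)", simplified] e[of p])
  then have "ennreal (\<Sum>a<card I. (p \<circ> h) a * log 2 (real ((k \<circ> h) a))) \<in>
     {ennreal (\<Sum>a<n. p a * log 2 (real (k a))) | n p \<psi> k. uc_decomp \<rho> n p \<psi> k}" by blast
  then have "CfU \<rho> \<le> ennreal (\<Sum>a<card I. (p \<circ> h) a * log 2 (real ((k \<circ> h) a)))"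
    unfolding CfU_def by (rule Inf_lower)
  then show ?thesis by (simp add: e[of "\<lambda>a. p a * log 2 (real (k a))"] gcost_def)
qed

lemma CfU_lower:
  assumes "\<And>(I::nat set) p \<psi> k. gdec \<rho> I p \<psi> k \<Longrightarrow> y \<le> ennreal (gcost I p k)"
  shows "y \<le> CfU \<rho>"
  unfolding CfU_def
proof (rule Inf_greatest, clarify)
  fix n p \<psi> k assume "uc_decomp \<rho> n p \<psi> k"
  then have "gdec \<rho> {..<n} p \<psi> k" by (simp add: gdec_def uc_decomp_def)
  from assms[OF this] show "y \<le> ennreal (\<Sum>a<n. p a * log 2 (real (k a)))" by (simp add: gcost_def)
qed

lemma CfU_less:
  assumes "CfU \<rho> < x"
  shows "\<exists>(I::nat set) p \<psi> k. gdec \<rho> I p \<psi> k \<and> ennreal (gcost I p k) < x"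
proof -
  from assms obtain n p \<psi> k where "uc_decomp \<rho> n p \<psi> k" "ennreal (\<Sum>a<n. p a * log 2 (real (k a))) < x"
    unfolding CfU_def Inf_less_iff by blast
  then show ?thesis
    by (intro exI[of _ "{..<n}"] exI[of _ p] exI[of _ \<psi>] exI[of _ k])
       (simp add: gdec_def uc_decomp_def gcost_def)
qed


lemma mmult_scaleR_right: "(A::complex^'n^'m) ** (c *\<^sub>R B) = c *\<^sub>R (A ** (B::complex^'p^'n))"
  by (simp add: vec_eq_iff matrix_matrix_mult_def scaleR_sum_right)

lemma mmult_scaleR_left: "(c *\<^sub>R (A::complex^'n^'m)) ** B = c *\<^sub>R (A ** (B::complex^'p^'n))"
  by (simp add: vec_eq_iff matrix_matrix_mult_def scaleR_sum_right)

lemma adj_mult: "adj ((A::complex^'n^'n) ** B) = adj B ** adj A"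
  by (simp add: vec_eq_iff matrix_matrix_mult_def adj_def mult.commute)

lemma adj_proj: "adj (incoh_proj P) = incoh_proj P"
  by (auto simp: vec_eq_iff adj_def incoh_proj_def)

lemma congr_outer: "(W::complex^'n^'n) ** outer v ** adj W = outer (W *v v)"
proof -
  have "\<And>i l. (\<Sum>k\<in>UNIV. (\<Sum>j\<in>UNIV. W $ i $ j * (v $ j * cnj (v $ k))) * cnj (W $ l $ k))
     = (\<Sum>j\<in>UNIV. W $ i $ j * v $ j) * (\<Sum>k\<in>UNIV. cnj (W $ l $ k) * cnj (v $ k))"
    by (simp add: sum_product sum_distrib_left sum_distrib_right mult_ac) 
  then show ?thesis
    by (simp add: vec_eq_iff matrix_matrix_mult_def outer_def adj_def matrix_vector_mult_def cnj_sum)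
qed

lemma matrix_add_rdistrib': "((B + C) ** (A::complex^'p^'n)) = (B ** A) + (C ** (A::complex^'p^'n))"
  by (simp add: vec_eq_iff matrix_matrix_mult_def sum.distrib[symmetric] distrib_right)

lemma congr_sum:
  assumes "finite I"
  shows "(W::complex^'n^'n) ** (\<Sum>a\<in>I. c a *\<^sub>R M a) ** adj W = (\<Sum>a\<in>I. c a *\<^sub>R (W ** M a ** adj W))"
  using assms
  by (induction rule: finite_induct)
     (simp_all add: matrix_add_ldistrib matrix_add_rdistrib' mmult_scaleR_left mmult_scaleR_right)

lemma outer_scaleR: "outer (c *\<^sub>R v) = (c^2) *\<^sub>R outer v"
  by (simp add: vec_eq_iff outer_def power2_eq_square)

lemma outer_zero[simp]: "outer 0 = 0"
  by (simp add: vec_eq_iff outer_def)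

lemma trace_proj: "trace ((\<rho>::complex^'n^'n) ** incoh_proj P) = (\<Sum>i\<in>P. \<rho> $ i $ i)"
proof -
  have e: "\<And>i. {k. k = i \<and> k \<in> P} = (if i \<in> P then {i} else {})" by auto
  show ?thesis
    by (simp add: trace_def matrix_matrix_mult_def incoh_proj_def if_distrib if_distribR sum.If_cases e cong: if_cong)
qed

lemma proj_vec: "(incoh_proj P *v (v::complex^'n)) $ i = (if i \<in> P then v $ i else 0)"
proof -
  have "(incoh_proj P *v v) $ i = (\<Sum>j\<in>UNIV. if j = i then (if i \<in> P then v $ j else 0) else 0)"
    unfolding matrix_vector_mult_def vec_lambda_beta
    by (rule sum.cong) (auto simp: incoh_proj_def)
  also have "\<dots> = (if i \<in> P then v $ i else 0)" by (simp add: sum.delta')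
  finally show ?thesis .
qed
lemma proj_left: "(incoh_proj P ** (M::complex^'n^'n)) $ a $ b = (if a \<in> P then M $ a $ b else 0)"
proof -
  have "(incoh_proj P ** M) $ a $ b = (\<Sum>j\<in>UNIV. if j = a then (if a \<in> P then M $ j $ b else 0) else 0)"
    unfolding matrix_matrix_mult_def vec_lambda_beta
    by (rule sum.cong) (auto simp: incoh_proj_def)
  also have "\<dots> = (if a \<in> P then M $ a $ b else 0)" by (simp add: sum.delta')
  finally show ?thesis .
qed
lemma proj_right: "((M::complex^'n^'n) ** incoh_proj P) $ a $ b = (if b \<in> P then M $ a $ b else 0)"
proof -
  have "(M ** incoh_proj P) $ a $ b = (\<Sum>j\<in>UNIV. if j = b then (if b \<in> P then M $ a $ j else 0) else 0)"
    unfolding matrix_matrix_mult_def vec_lambda_beta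
    by (rule sum.cong) (auto simp: incoh_proj_def)
  also have "\<dots> = (if b \<in> P then M $ a $ b else 0)" by (simp add: sum.delta')
  finally show ?thesis .
qed


definition upv :: "'n set \<Rightarrow> complex^'n \<Rightarrow> complex^'n" where
  "upv J z = (\<chi> j. if j \<in> J then z $ j / complex_of_real (sqrt (real (card J))) else 0)"

lemma unif_coh_iff:
  "unif_coh k (\<psi>::complex^'n) \<longleftrightarrow> (\<exists>J z. J \<noteq> {} \<and> card J = k \<and> (\<forall>j. cmod (z $ j) = 1) \<and> \<psi> = upv J z)"
proof
  assume "unif_coh k \<psi>"
  then obtain J \<theta> where J: "J \<noteq> {}" "card J = k"
    "\<psi> = (\<chi> j. if j \<in> J then cis (\<theta> j) / complex_of_real (sqrt (real k)) else 0)"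
    unfolding unif_coh_def by blast
  then show "\<exists>J z. J \<noteq> {} \<and> card J = k \<and> (\<forall>j. cmod (z $ j) = 1) \<and> \<psi> = upv J z"
    by (intro exI[of _ J] exI[of _ "\<chi> j. cis (\<theta> j)"]) (auto simp: upv_def)
next
  assume "\<exists>J z. J \<noteq> {} \<and> card J = k \<and> (\<forall>j. cmod (z $ j) = 1) \<and> \<psi> = upv J z"
  then obtain J z where J: "J \<noteq> {}" "card J = k" "\<forall>j. cmod (z $ j) = 1" "\<psi> = upv J z" by blast
  have c: "cis (Arg (z $ j)) = z $ j" for j
    using rcis_cmod_Arg[of "z $ j"] J(3) by (simp add: rcis_def)
  show "unif_coh k \<psi>" unfolding unif_coh_def
    by (intro exI[of _ J] exI[of _ "\<lambda>j. Arg (z $ j)"]) (use J c in \<open>auto simp: upv_def\<close>)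
qed

lemma scale_core:
  assumes "finite T" "x \<in> T"
  shows "z / complex_of_real (sqrt (real k)) =
    sqrt (real (card T) / real k) *\<^sub>R (z / complex_of_real (sqrt (real (card T))))"
proof -
  have "card T > 0" using assms card_gt_0_iff by blast
  then have "sqrt (real (card T) / real k) / sqrt (real (card T)) = 1 / sqrt (real k)"
    by (simp add: real_sqrt_divide)
  have "sqrt (real (card T) / real k) *\<^sub>R (z / complex_of_real (sqrt (real (card T))))
     = z * complex_of_real (sqrt (real (card T) / real k) / sqrt (real (card T)))"
    by (simp add: scaleR_conv_of_real)
  also have "\<dots> = z / complex_of_real (sqrt (real k))"
    by (simp only: \<open>sqrt (real (card T) / real k) / sqrt (real (card T)) = 1 / sqrt (real k)\<close>)
       (simp add: divide_inverse of_real_inverse)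
  finally show ?thesis by simp
qed

lemma proj_upv:
  "incoh_proj P *v upv J (z::complex^'n) = sqrt (real (card (J \<inter> P)) / real (card J)) *\<^sub>R upv (J \<inter> P) z"
proof -
  have c: "(incoh_proj P *v upv J z) $ i = (if i \<in> P then upv J z $ i else 0)" for i
    by (rule proj_vec)
  show ?thesis
  proof (rule iffD2[OF vec_eq_iff], rule allI)
    fix i
    show "(incoh_proj P *v upv J z) $ i = (sqrt (real (card (J \<inter> P)) / real (card J)) *\<^sub>R upv (J \<inter> P) z) $ i"
    proof (cases "i \<in> J \<inter> P")
      case True
      then show ?thesis unfolding c using scale_core[of "J \<inter> P" i "z $ i" "card J"] by (simp add: upv_def)
    next
      case False
      then show ?thesis unfolding c by (auto simp: upv_def)
    qed
  qed
qed

lemma unitary_upv: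
  assumes "incoh_unitary U" "\<forall>j. cmod (z $ j) = 1"
  shows "\<exists>\<sigma> z'. inj \<sigma> \<and> (\<forall>j. cmod (z' $ j) = 1) \<and>
     U *v upv J (z::complex^'n) = upv (\<sigma> ` J) z'"
proof -
  obtain \<sigma> \<phi> where s: "\<sigma> permutes UNIV" and U: "U = (\<chi> i j. if i = \<sigma> j then cis (\<phi> j) else 0)"
    using assms(1) unfolding incoh_unitary_def by blast
  have inj: "inj \<sigma>" using s permutes_inj by blast
  have inv1: "\<sigma> (inv \<sigma> x) = x" "inv \<sigma> (\<sigma> x) = x" for x using permutes_inverses[OF s] by auto
  define z' where "z' = (\<chi> i. cis (\<phi> (inv \<sigma> i)) * z $ (inv \<sigma> i))"
  have nz: "\<forall>j. cmod (z' $ j) = 1" using assms(2) by (simp add: z'_def norm_mult)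
  have cardJ: "card (\<sigma> ` J) = card J" using inj by (simp add: card_image inj_on_def)
  have memJ: "inv \<sigma> i \<in> J \<longleftrightarrow> i \<in> \<sigma> ` J" for i
    by (metis image_iff inv1)
  have e: "{j. i = \<sigma> j} = {inv \<sigma> i}" for i by (auto simp: inv1)
  have "(U *v upv J z) $ i = cis (\<phi> (inv \<sigma> i)) * upv J z $ (inv \<sigma> i)" for i
  proof -
    have "(U *v upv J z) $ i = (\<Sum>j\<in>UNIV. if i = \<sigma> j then cis (\<phi> j) * upv J z $ j else 0)"
      by (simp add: U matrix_vector_mult_def if_distrib if_distribR cong: if_cong)
    also have "\<dots> = (\<Sum>j\<in>{j. i = \<sigma> j}. cis (\<phi> j) * upv J z $ j)"
      by (simp add: sum.If_cases)
    finally show ?thesis by (simp add: e)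
  qed
  then have "U *v upv J z = upv (\<sigma> ` J) z'"
    by (auto simp: vec_eq_iff upv_def z'_def cardJ memJ)
  then show ?thesis using inj nz by blast
qed


lemma supp_upv: "J \<noteq> {} \<Longrightarrow> (\<forall>j. cmod (z $ j) = 1) \<Longrightarrow> supp (upv J (z::complex^'n)) = J"
  by (auto simp: supp_def upv_def) (metis norm_zero zero_neq_one)

lemma unif_cohE:
  assumes "unif_coh k (\<psi>::complex^'n)"
  obtains z where "\<forall>j. cmod (z $ j) = 1" "\<psi> = upv (supp \<psi>) z" "k = card (supp \<psi>)" "supp \<psi> \<noteq> {}"
proof -
  obtain J z where J: "J \<noteq> {}" "card J = k" "\<forall>j. cmod (z $ j) = 1" "\<psi> = upv J z"
    using assms unfolding unif_coh_iff by blast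
  then have "supp \<psi> = J" using supp_upv by blast
  then show ?thesis using that J by blast
qed

lemma upv_unif: "J \<noteq> {} \<Longrightarrow> (\<forall>j. cmod (z $ j) = 1) \<Longrightarrow> unif_coh (card J) (upv J (z::complex^'n))"
  unfolding unif_coh_iff by blast

lemma mv_scaleR: "(U::complex^'n^'m) *v (c *\<^sub>R v) = c *\<^sub>R (U *v v)"
  by (simp add: vec_eq_iff matrix_vector_mult_def scaleR_sum_right)

lemma outer_upv_diag:
  assumes "\<forall>j. cmod (z $ j) = 1"
  shows "outer (upv J (z::complex^'n)) $ i $ i = complex_of_real (if i \<in> J then 1 / real (card J) else 0)"
proof -
  have "z $ i * cnj (z $ i) = 1" using assms complex_norm_square[of "z $ i"] by simp
  moreover have "complex_of_real (sqrt (real (card J))) * complex_of_real (sqrt (real (card J))) = of_real (real (card J))"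
    by (simp flip: of_real_mult)
  ultimately show ?thesis
    by (auto simp: outer_def upv_def)
qed

lemma pio_term:
  fixes \<rho> :: "complex^'n^'n" and I :: "'i set"
  assumes G: "gdec \<rho> I p \<psi> k" and U: "incoh_unitary U"
  shows "Re (trace (\<rho> ** incoh_proj P)) = (\<Sum>x\<in>I. p x * real (card (supp (\<psi> x) \<inter> P)) / real (k x))"
    and "\<exists>\<phi>. (\<forall>x\<in>I. supp (\<psi> x) \<inter> P \<noteq> {} \<longrightarrow> unif_coh (card (supp (\<psi> x) \<inter> P)) (\<phi> x)) \<and>
         U ** incoh_proj P ** \<rho> ** incoh_proj P ** adj U =
         (\<Sum>x\<in>I. (p x * real (card (supp (\<psi> x) \<inter> P)) / real (k x)) *\<^sub>R outer (\<phi> x))"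
proof -
  have fin: "finite I" and rho: "\<rho> = (\<Sum>x\<in>I. p x *\<^sub>R outer (\<psi> x))"
    and uc: "\<And>x. x \<in> I \<Longrightarrow> unif_coh (k x) (\<psi> x)" using G by (auto simp: gdec_def)
  define Z where "Z x = (SOME z. (\<forall>j. cmod (z $ j) = 1) \<and> \<psi> x = upv (supp (\<psi> x)) z)" for x
  have Z: "\<forall>j. cmod (Z x $ j) = 1" "\<psi> x = upv (supp (\<psi> x)) (Z x)" "k x = card (supp (\<psi> x))"
     "supp (\<psi> x) \<noteq> {}" if xI: "x \<in> I" for x
  proof -
    obtain z where zz: "(\<forall>j. cmod (z $ j) = 1) \<and> \<psi> x = upv (supp (\<psi> x)) z" and
      kk: "k x = card (supp (\<psi> x))" "supp (\<psi> x) \<noteq> {}"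
      using unif_cohE[OF uc[OF xI]] by blast
    have "(\<forall>j. cmod (Z x $ j) = 1) \<and> \<psi> x = upv (supp (\<psi> x)) (Z x)"
      unfolding Z_def using zz by (rule someI)
    then show "\<forall>j. cmod (Z x $ j) = 1" "\<psi> x = upv (supp (\<psi> x)) (Z x)" "k x = card (supp (\<psi> x))"
     "supp (\<psi> x) \<noteq> {}" using kk by blast+
  qed
  have diag: "\<rho> $ i $ i = complex_of_real (\<Sum>x\<in>I. p x * (if i \<in> supp (\<psi> x) then 1 / real (k x) else 0))" for i
  proof -
    have "\<rho> $ i $ i = (\<Sum>x\<in>I. p x *\<^sub>R outer (\<psi> x) $ i $ i)" by (simp add: rho)
    also have "\<dots> = (\<Sum>x\<in>I. complex_of_real (p x * (if i \<in> supp (\<psi> x) then 1 / real (k x) else 0)))"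
    proof (rule sum.cong)
      fix x assume x: "x \<in> I"
      have "outer (\<psi> x) $ i $ i = outer (upv (supp (\<psi> x)) (Z x)) $ i $ i"
        using arg_cong[OF Z(2)[OF x], of "\<lambda>v. outer v $ i $ i"] by simp
      also have "\<dots> = complex_of_real (if i \<in> supp (\<psi> x) then 1 / real (k x) else 0)"
        using outer_upv_diag[OF Z(1)[OF x]] Z(3)[OF x] by simp
      finally show "p x *\<^sub>R outer (\<psi> x) $ i $ i = complex_of_real (p x * (if i \<in> supp (\<psi> x) then 1 / real (k x) else 0))"
        by (simp add: scaleR_conv_of_real)
    qed simp
    finally show ?thesis by simp
  qed
  have "Re (trace (\<rho> ** incoh_proj P)) = (\<Sum>i\<in>P. \<Sum>x\<in>I. p x * (if i \<in> supp (\<psi> x) then 1 / real (k x) else 0))"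
    by (simp add: trace_proj diag)
  also have "\<dots> = (\<Sum>x\<in>I. \<Sum>i\<in>P. p x * (if i \<in> supp (\<psi> x) then 1 / real (k x) else 0))"
    by (rule sum.swap)
  also have "\<dots> = (\<Sum>x\<in>I. p x * real (card (supp (\<psi> x) \<inter> P)) / real (k x))"
  proof (rule sum.cong)
    fix x assume "x \<in> I"
    have "(\<Sum>i\<in>P. p x * (if i \<in> supp (\<psi> x) then 1 / real (k x) else 0)) =
          (\<Sum>i\<in>P \<inter> supp (\<psi> x). p x * (1 / real (k x)))"
      by (simp add: if_distrib sum.If_cases Int_commute cong: if_cong) 
    also have "\<dots> = p x * real (card (supp (\<psi> x) \<inter> P)) / real (k x)"
      by (simp add: Int_commute)
    finally show "(\<Sum>i\<in>P. p x * (if i \<in> supp (\<psi> x) then 1 / real (k x) else 0)) = p x * real (card (supp (\<psi> x) \<inter> P)) / real (k x)" .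
  qed simp
  finally show "Re (trace (\<rho> ** incoh_proj P)) = (\<Sum>x\<in>I. p x * real (card (supp (\<psi> x) \<inter> P)) / real (k x))" .
  define W where "W = U ** incoh_proj P"
  have K: "U ** incoh_proj P ** \<rho> ** incoh_proj P ** adj U = W ** \<rho> ** adj W"
    by (simp add: W_def adj_mult adj_proj matrix_mul_assoc)
  also have "\<dots> = (\<Sum>x\<in>I. p x *\<^sub>R outer (W *v \<psi> x))"
    by (simp add: rho congr_sum[OF fin] congr_outer)
  finally have K1: "U ** incoh_proj P ** \<rho> ** incoh_proj P ** adj U = (\<Sum>x\<in>I. p x *\<^sub>R outer (W *v \<psi> x))" .
  have "\<forall>x\<in>I. \<exists>f. (supp (\<psi> x) \<inter> P \<noteq> {} \<longrightarrow> unif_coh (card (supp (\<psi> x) \<inter> P)) f) \<and>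
        W *v \<psi> x = sqrt (real (card (supp (\<psi> x) \<inter> P)) / real (k x)) *\<^sub>R f"
  proof
    fix x assume x: "x \<in> I"
    obtain \<sigma> z' where s: "inj \<sigma>" "\<forall>j. cmod (z' $ j) = 1"
      "U *v upv (supp (\<psi> x) \<inter> P) (Z x) = upv (\<sigma> ` (supp (\<psi> x) \<inter> P)) z'"
      using unitary_upv[OF U Z(1)[OF x]] by blast
    have "W *v \<psi> x = U *v (incoh_proj P *v upv (supp (\<psi> x)) (Z x))"
      using arg_cong[OF Z(2)[OF x], of "\<lambda>v. W *v v"] by (simp add: W_def matrix_vector_mul_assoc)
    also have "\<dots> = sqrt (real (card (supp (\<psi> x) \<inter> P)) / real (k x)) *\<^sub>R upv (\<sigma> ` (supp (\<psi> x) \<inter> P)) z'"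
      by (simp add: proj_upv mv_scaleR s(3) Z(3)[OF x])
    finally have e: "W *v \<psi> x = sqrt (real (card (supp (\<psi> x) \<inter> P)) / real (k x)) *\<^sub>R upv (\<sigma> ` (supp (\<psi> x) \<inter> P)) z'" .
    have "supp (\<psi> x) \<inter> P \<noteq> {} \<Longrightarrow> unif_coh (card (supp (\<psi> x) \<inter> P)) (upv (\<sigma> ` (supp (\<psi> x) \<inter> P)) z')"
      using upv_unif[of "\<sigma> ` (supp (\<psi> x) \<inter> P)" z'] s(1,2)
      by (simp add: card_image inj_on_subset[OF s(1)])
    with e show "\<exists>f. (supp (\<psi> x) \<inter> P \<noteq> {} \<longrightarrow> unif_coh (card (supp (\<psi> x) \<inter> P)) f) \<and>
        W *v \<psi> x = sqrt (real (card (supp (\<psi> x) \<inter> P)) / real (k x)) *\<^sub>R f" by blast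
  qed
  then obtain \<phi> where \<phi>: "\<forall>x\<in>I. (supp (\<psi> x) \<inter> P \<noteq> {} \<longrightarrow> unif_coh (card (supp (\<psi> x) \<inter> P)) (\<phi> x)) \<and>
        W *v \<psi> x = sqrt (real (card (supp (\<psi> x) \<inter> P)) / real (k x)) *\<^sub>R \<phi> x"
    by (rule bchoice[elim_format]) blast
  have "(\<Sum>x\<in>I. p x *\<^sub>R outer (W *v \<psi> x)) = (\<Sum>x\<in>I. (p x * real (card (supp (\<psi> x) \<inter> P)) / real (k x)) *\<^sub>R outer (\<phi> x))"
  proof (rule sum.cong)
    fix x assume x: "x \<in> I"
    have "W *v \<psi> x = sqrt (real (card (supp (\<psi> x) \<inter> P)) / real (k x)) *\<^sub>R \<phi> x" using \<phi> x by blast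
    then show "p x *\<^sub>R outer (W *v \<psi> x) = (p x * real (card (supp (\<psi> x) \<inter> P)) / real (k x)) *\<^sub>R outer (\<phi> x)"
      by (simp add: outer_scaleR)
  qed simp
  then have A2: "U ** incoh_proj P ** \<rho> ** incoh_proj P ** adj U =
         (\<Sum>x\<in>I. (p x * real (card (supp (\<psi> x) \<inter> P)) / real (k x)) *\<^sub>R outer (\<phi> x))" using K1 by simp
  have A1: "\<forall>x\<in>I. supp (\<psi> x) \<inter> P \<noteq> {} \<longrightarrow> unif_coh (card (supp (\<psi> x) \<inter> P)) (\<phi> x)" using \<phi> by blast
  show "\<exists>\<phi>. (\<forall>x\<in>I. supp (\<psi> x) \<inter> P \<noteq> {} \<longrightarrow> unif_coh (card (supp (\<psi> x) \<inter> P)) (\<phi> x)) \<and>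
         U ** incoh_proj P ** \<rho> ** incoh_proj P ** adj U =
         (\<Sum>x\<in>I. (p x * real (card (supp (\<psi> x) \<inter> P)) / real (k x)) *\<^sub>R outer (\<phi> x))"
    using A1 A2 by blast
qed


lemma two_pt: fixes g :: "'n::finite \<Rightarrow> complex"
  assumes "i \<noteq> j"
  shows "(\<Sum>b\<in>UNIV. g b * (if b = i then t else if b = j then 1 else 0)) = g i * t + g j"
proof -
  have "(\<Sum>b\<in>UNIV. g b * (if b = i then t else if b = j then 1 else 0)) =
        (\<Sum>b\<in>UNIV. (if b = i then g b * t else 0) + (if b = j then g b else 0))"
    by (rule sum.cong) (use assms in auto)
  also have "\<dots> = g i * t + g j" by (simp only: sum.distrib sum.delta sum.delta' finite UNIV_I if_True)
  finally show ?thesis .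
qed
lemma two_pt': fixes g :: "'n::finite \<Rightarrow> complex"
  assumes "i \<noteq> j"
  shows "(\<Sum>b\<in>UNIV. cnj (if b = i then t else if b = j then 1 else 0) * g b) = cnj t * g i + g j"
proof -
  have "(\<Sum>b\<in>UNIV. cnj (if b = i then t else if b = j then 1 else 0) * g b) =
        (\<Sum>b\<in>UNIV. (if b = i then cnj t * g b else 0) + (if b = j then g b else 0))"
    by (rule sum.cong) (use assms in auto)
  also have "\<dots> = cnj t * g i + g j" by (simp only: sum.distrib sum.delta sum.delta' finite UNIV_I if_True)
  finally show ?thesis .
qed
lemma one_pt: fixes g :: "'n::finite \<Rightarrow> complex"
  shows "(\<Sum>b\<in>UNIV. g b * (if b = i then 1 else 0)) = g i"
    "(\<Sum>b\<in>UNIV. cnj (if b = i then 1 else 0) * g b) = g i"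
proof -
  have "(\<Sum>b\<in>UNIV. g b * (if b = i then 1 else 0)) = (\<Sum>b\<in>UNIV. if b = i then g b else 0)"
    by (rule sum.cong) auto
  then show "(\<Sum>b\<in>UNIV. g b * (if b = i then 1 else 0)) = g i" by (simp only: sum.delta finite UNIV_I if_True)
  have "(\<Sum>b\<in>UNIV. cnj (if b = i then 1 else 0) * g b) = (\<Sum>b\<in>UNIV. if b = i then g b else 0)"
    by (rule sum.cong) auto
  then show "(\<Sum>b\<in>UNIV. cnj (if b = i then 1 else 0) * g b) = g i" by (simp only: sum.delta finite UNIV_I if_True)
qed

lemma form_eq: "(\<Sum>i\<in>UNIV. \<Sum>j\<in>UNIV. cnj (v $ i) * (\<rho>::complex^'n^'n) $ i $ j * v $ j) =
   (\<Sum>i\<in>UNIV. cnj (v $ i) * (\<Sum>j\<in>UNIV. \<rho> $ i $ j * v $ j))"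
  by (simp add: sum_distrib_left mult.assoc)

lemma state_diag:
  assumes "is_state (\<rho>::complex^'n^'n)"
  shows "Im (\<rho> $ i $ i) = 0" "0 \<le> Re (\<rho> $ i $ i)"
proof -
  define v :: "complex^'n" where "v = (\<chi> a. if a = i then 1 else 0)"
  have inner: "(\<Sum>b\<in>UNIV. \<rho> $ a $ b * v $ b) = \<rho> $ a $ i" for a
    unfolding v_def vec_lambda_beta by (rule one_pt(1))
  have e: "(\<Sum>a\<in>UNIV. \<Sum>b\<in>UNIV. cnj (v $ a) * \<rho> $ a $ b * v $ b) = \<rho> $ i $ i"
    unfolding form_eq inner unfolding v_def vec_lambda_beta by (rule one_pt(2))
  have "Im (\<Sum>a\<in>UNIV. \<Sum>b\<in>UNIV. cnj (v $ a) * \<rho> $ a $ b * v $ b) = 0 \<and>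
        0 \<le> Re (\<Sum>a\<in>UNIV. \<Sum>b\<in>UNIV. cnj (v $ a) * \<rho> $ a $ b * v $ b)"
    using assms unfolding is_state_def by blast
  then show "Im (\<rho> $ i $ i) = 0" "0 \<le> Re (\<rho> $ i $ i)" unfolding e by auto
qed

lemma state_offdiag:
  assumes S: "is_state (\<rho>::complex^'n^'n)" and z: "\<rho> $ i $ i = 0"
  shows "\<rho> $ i $ j = 0"
proof (cases "i = j")
  case True then show ?thesis using z by simp
next
  case False
  define c where "c = \<rho> $ i $ j"
  have herm: "\<rho> $ j $ i = cnj c"
  proof -
    have "adj \<rho> $ i $ j = \<rho> $ i $ j" using S by (simp add: is_state_def)
    then show ?thesis by (simp add: adj_def c_def) (metis complex_cnj_cnj)
  qed
  show ?thesis
  proof (rule ccontr)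
    assume nz: "\<rho> $ i $ j \<noteq> 0"
    then have nc: "0 < (cmod c)^2" by (simp add: c_def)
    define s :: real where "s = (Re (\<rho> $ j $ j) + 1) / (2 * (cmod c)^2)"
    define t where "t = - complex_of_real s * c"
    define v :: "complex^'n" where "v = (\<chi> a. if a = i then t else if a = j then 1 else 0)"
    have inner: "(\<Sum>b\<in>UNIV. \<rho> $ a $ b * v $ b) = \<rho> $ a $ i * t + \<rho> $ a $ j" for a
      unfolding v_def vec_lambda_beta by (rule two_pt[OF False])
    have "(\<Sum>a\<in>UNIV. \<Sum>b\<in>UNIV. cnj (v $ a) * \<rho> $ a $ b * v $ b) =
          cnj t * (\<rho> $ i $ i * t + \<rho> $ i $ j) + (\<rho> $ j $ i * t + \<rho> $ j $ j)"
      unfolding form_eq inner unfolding v_def vec_lambda_beta by (rule two_pt'[OF False])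
    also have "\<dots> = - 2 * complex_of_real s * (c * cnj c) + \<rho> $ j $ j"
      unfolding z herm t_def c_def by (simp add: algebra_simps)
    also have "\<dots> = complex_of_real (- 2 * s * (cmod c)^2) + \<rho> $ j $ j"
      by (simp flip: complex_norm_square)
    finally have "Re (\<Sum>a\<in>UNIV. \<Sum>b\<in>UNIV. cnj (v $ a) * \<rho> $ a $ b * v $ b) = - 2 * s * (cmod c)^2 + Re (\<rho> $ j $ j)"
      by simp
    also have "\<dots> = -1" using nc by (simp add: s_def field_simps)
    moreover have "0 \<le> Re (\<Sum>a\<in>UNIV. \<Sum>b\<in>UNIV. cnj (v $ a) * \<rho> $ a $ b * v $ b)"
      using S unfolding is_state_def by blast
    ultimately show False by simp
  qed
qed
lemma q_nonneg:
  assumes "is_state (\<rho>::complex^'n^'n)"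
  shows "0 \<le> Re (trace (\<rho> ** incoh_proj P))"
  using state_diag[OF assms] by (simp add: trace_proj sum_nonneg)

lemma q_zero:
  assumes S: "is_state (\<rho>::complex^'n^'n)" and q: "Re (trace (\<rho> ** incoh_proj P)) = 0"
  shows "U ** incoh_proj P ** \<rho> ** incoh_proj P ** V = 0"
proof -
  have "(\<Sum>i\<in>P. Re (\<rho> $ i $ i)) = 0" using q by (simp add: trace_proj)
  then have "\<forall>i\<in>P. Re (\<rho> $ i $ i) = 0"
    using state_diag(2)[OF S] by (subst (asm) sum_nonneg_eq_0_iff) auto
  then have d: "\<And>i. i \<in> P \<Longrightarrow> \<rho> $ i $ i = 0"
    using state_diag(1)[OF S] by (simp add: complex_eq_iff)
  have "incoh_proj P ** \<rho> ** incoh_proj P = 0"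
    by (auto simp: vec_eq_iff proj_left proj_right d state_offdiag[OF S])
  then show ?thesis by (simp flip: matrix_mul_assoc)
qed

lemma partition_sum:
  fixes f :: "'n \<Rightarrow> 'z::comm_monoid_add"
  assumes fB: "finite B" and part: "\<forall>i. \<exists>!b. b \<in> B \<and> i \<in> P b" and fS: "finite S"
  shows "(\<Sum>b\<in>B. sum f (S \<inter> P b)) = sum f S"
proof -
  define g where "g i = (THE b. b \<in> B \<and> i \<in> P b)" for i
  have g: "g i \<in> B \<and> i \<in> P (g i)" for i
    unfolding g_def using theI'[OF spec[OF part, of i]] .
  have gu: "b \<in> B \<Longrightarrow> i \<in> P b \<Longrightarrow> g i = b" for i b
    unfolding g_def by (rule the1_equality[OF spec[OF part]]) simp
  have "sum f S = (\<Sum>b\<in>B. sum f {x \<in> S. g x = b})"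
    by (rule sum.group[symmetric]) (use fS fB g in auto)
  also have "\<dots> = (\<Sum>b\<in>B. sum f (S \<inter> P b))"
    by (rule sum.cong) (use g gu in \<open>auto intro!: arg_cong[where f="sum f"]\<close>)
  finally show ?thesis by simp
qed


lemma pio_bound:
  fixes \<rho> :: "complex^'n^'n" and I :: "'i set"
  assumes G: "gdec \<rho> I pp \<psi> k" and U: "incoh_unitary U"
    and q: "q = Re (trace (\<rho> ** incoh_proj P))" and qnz: "q \<noteq> 0"
  shows "ennreal q * CfU ((1/q) *\<^sub>R (U ** incoh_proj P ** \<rho> ** incoh_proj P ** adj U)) \<le>
    ennreal (\<Sum>x\<in>I. pp x * (real (card (supp (\<psi> x) \<inter> P)) / real (k x)) * log 2 (real (card (supp (\<psi> x) \<inter> P))))"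
proof -
  define m where "m x = card (supp (\<psi> x) \<inter> P)" for x
  have fin: "finite I" and nn: "\<And>x. x \<in> I \<Longrightarrow> 0 \<le> pp x" using G by (auto simp: gdec_def)
  have qe: "q = (\<Sum>x\<in>I. pp x * real (m x) / real (k x))"
    using pio_term(1)[OF G U, of P] q by (simp add: m_def)
  obtain \<phi> where \<phi>: "\<forall>x\<in>I. supp (\<psi> x) \<inter> P \<noteq> {} \<longrightarrow> unif_coh (m x) (\<phi> x)"
    and K: "U ** incoh_proj P ** \<rho> ** incoh_proj P ** adj U = (\<Sum>x\<in>I. (pp x * real (m x) / real (k x)) *\<^sub>R outer (\<phi> x))"
    using pio_term(2)[OF G U, of P] by (auto simp: m_def)
  have q0: "0 \<le> q" unfolding qe using nn by (intro sum_nonneg) auto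
  then have qpos: "0 < q" using qnz by simp
  define I' where "I' = {x\<in>I. supp (\<psi> x) \<inter> P \<noteq> {}}"
  have sub: "I' \<subseteq> I" by (auto simp: I'_def)
  have m0: "x \<in> I - I' \<Longrightarrow> m x = 0" for x by (auto simp: I'_def m_def)
  define w where "w x = pp x * real (m x) / real (k x) / q" for x
  define F where "F = (\<Sum>x\<in>I. pp x * (real (m x) / real (k x)) * log 2 (real (m x)))"
  have "gdec ((1/q) *\<^sub>R (U ** incoh_proj P ** \<rho> ** incoh_proj P ** adj U)) I' w \<phi> m"
    unfolding gdec_def
  proof (intro conjI)
    show "finite I'" using fin sub finite_subset by blast
    show "\<forall>a\<in>I'. 0 \<le> w a \<and> unif_coh (m a) (\<phi> a)"
      using \<phi> nn qpos by (auto simp: I'_def w_def)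
    have "sum w I' = sum w I"
      by (rule sum.mono_neutral_left[OF fin sub]) (auto simp: w_def m0)
    also have "\<dots> = q / q" unfolding w_def by (simp only: sum_divide_distrib[symmetric] qe[symmetric])
    finally show "sum w I' = 1" using qpos by simp
    have "(1/q) *\<^sub>R (U ** incoh_proj P ** \<rho> ** incoh_proj P ** adj U) = (\<Sum>x\<in>I. w x *\<^sub>R outer (\<phi> x))"
      unfolding K w_def by (simp add: scaleR_sum_right divide_inverse mult_ac)
    also have "\<dots> = (\<Sum>x\<in>I'. w x *\<^sub>R outer (\<phi> x))"
      by (rule sum.mono_neutral_right[OF fin sub]) (auto simp: w_def m0)
    finally show "(1/q) *\<^sub>R (U ** incoh_proj P ** \<rho> ** incoh_proj P ** adj U) = (\<Sum>x\<in>I'. w x *\<^sub>R outer (\<phi> x))" .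
  qed
  then have C: "CfU ((1/q) *\<^sub>R (U ** incoh_proj P ** \<rho> ** incoh_proj P ** adj U)) \<le> ennreal (gcost I' w m)"
    by (rule gdec_CfU)
  have "gcost I' w m = (\<Sum>x\<in>I. w x * log 2 (real (m x)))"
    unfolding gcost_def by (rule sum.mono_neutral_left[OF fin sub]) (auto simp: w_def m0)
  also have "\<dots> = F / q" unfolding F_def w_def by (simp add: sum_divide_distrib)
  finally have gc: "gcost I' w m = F / q" .
  have F0: "0 \<le> F" unfolding F_def
  proof (intro sum_nonneg)
    fix x assume "x \<in> I"
    then show "0 \<le> pp x * (real (m x) / real (k x)) * log 2 (real (m x))"
      using nn by (cases "m x = 0") auto
  qed
  have "ennreal q * CfU ((1/q) *\<^sub>R (U ** incoh_proj P ** \<rho> ** incoh_proj P ** adj U)) \<le> ennreal q * ennreal (F / q)"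
    using C gc by (simp add: mult_left_mono)
  also have "\<dots> = ennreal F" using qpos F0 by (simp flip: ennreal_mult)
  finally show ?thesis by (simp add: F_def m_def)
qed

lemma pio_sum:
  fixes \<rho> :: "complex^'n^'n" and I :: "'i set"
  assumes G: "gdec \<rho> I pp \<psi> k" and fB: "finite B" and part: "\<forall>i. \<exists>!b. b \<in> B \<and> i \<in> P b"
  shows "(\<Sum>b\<in>B. \<Sum>x\<in>I. pp x * (real (card (supp (\<psi> x) \<inter> P b)) / real (k x)) * log 2 (real (card (supp (\<psi> x) \<inter> P b))))
     \<le> gcost I pp k"
proof -
  have fin: "finite I" and nn: "\<And>x. x \<in> I \<Longrightarrow> 0 \<le> pp x"
    using G by (auto simp: gdec_def)
  have kx: "k x = card (supp (\<psi> x)) \<and> 1 \<le> k x" if x: "x \<in> I" for x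
  proof -
    have "unif_coh (k x) (\<psi> x)" using G x by (simp add: gdec_def)
    then show ?thesis using unif_coh_supp(1,3) by blast
  qed
  have "(\<Sum>b\<in>B. \<Sum>x\<in>I. pp x * (real (card (supp (\<psi> x) \<inter> P b)) / real (k x)) * log 2 (real (card (supp (\<psi> x) \<inter> P b))))
      = (\<Sum>x\<in>I. \<Sum>b\<in>B. pp x * (real (card (supp (\<psi> x) \<inter> P b)) / real (k x)) * log 2 (real (card (supp (\<psi> x) \<inter> P b))))"
    by (rule sum.swap)
  also have "\<dots> \<le> (\<Sum>x\<in>I. pp x * log 2 (real (k x)))"
  proof (rule sum_mono)
    fix x assume x: "x \<in> I"
    have ck: "(\<Sum>b\<in>B. real (card (supp (\<psi> x) \<inter> P b))) = real (k x)"
    proof -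
      have "(\<Sum>b\<in>B. card (supp (\<psi> x) \<inter> P b)) = card (supp (\<psi> x))"
        using partition_sum[OF fB part, of "supp (\<psi> x)" "\<lambda>_. 1::nat"] by simp
      then show ?thesis using kx[OF x] by (metis of_nat_sum)
    qed
    have "(\<Sum>b\<in>B. pp x * (real (card (supp (\<psi> x) \<inter> P b)) / real (k x)) * log 2 (real (card (supp (\<psi> x) \<inter> P b))))
        \<le> (\<Sum>b\<in>B. pp x * (real (card (supp (\<psi> x) \<inter> P b)) / real (k x)) * log 2 (real (k x)))"
    proof (rule sum_mono)
      fix b assume "b \<in> B"
      have le: "card (supp (\<psi> x) \<inter> P b) \<le> k x" using kx[OF x] by (simp add: card_mono)
      show "pp x * (real (card (supp (\<psi> x) \<inter> P b)) / real (k x)) * log 2 (real (card (supp (\<psi> x) \<inter> P b)))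
        \<le> pp x * (real (card (supp (\<psi> x) \<inter> P b)) / real (k x)) * log 2 (real (k x))"
      proof (cases "card (supp (\<psi> x) \<inter> P b) = 0")
        case True then show ?thesis by simp
      next
        case False
        then have "log 2 (real (card (supp (\<psi> x) \<inter> P b))) \<le> log 2 (real (k x))"
          by (subst log_le_cancel_iff) (use le False in auto)
        then show ?thesis using nn[OF x] by (intro mult_left_mono) auto
      qed
    qed
    also have "\<dots> = pp x * log 2 (real (k x)) * ((\<Sum>b\<in>B. real (card (supp (\<psi> x) \<inter> P b))) / real (k x))"
      by (simp add: sum_distrib_left sum_divide_distrib mult_ac)
    also have "\<dots> = pp x * log 2 (real (k x))"
    proof -
      have kp: "real (k x) \<noteq> 0" using kx[OF x] by linarith
      show ?thesis by (simp only: ck) (use kp in simp)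
    qed
    finally show "(\<Sum>b\<in>B. pp x * (real (card (supp (\<psi> x) \<inter> P b)) / real (k x)) * log 2 (real (card (supp (\<psi> x) \<inter> P b))))
        \<le> pp x * log 2 (real (k x))" .
  qed
  finally show ?thesis by (simp add: gcost_def)
qed


lemma CfU_convex:
  fixes S :: "'i set" and \<rho>s :: "'i \<Rightarrow> complex^'n^'n"
  assumes fin: "finite S" and nn: "\<forall>i\<in>S. 0 \<le> p i" and s1: "sum p S = 1"
  shows "CfU (\<Sum>i\<in>S. p i *\<^sub>R \<rho>s i) \<le> (\<Sum>i\<in>S. ennreal (p i) * CfU (\<rho>s i))"
proof -
  define S' where "S' = {i\<in>S. p i \<noteq> 0}"
  have fS': "finite S'" using fin by (simp add: S'_def)
  have sub: "S' \<subseteq> S" by (auto simp: S'_def)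
  have eqM: "(\<Sum>i\<in>S. p i *\<^sub>R \<rho>s i) = (\<Sum>i\<in>S'. p i *\<^sub>R \<rho>s i)"
    by (rule sum.mono_neutral_right[OF fin sub]) (auto simp: S'_def)
  have eqR: "(\<Sum>i\<in>S. ennreal (p i) * CfU (\<rho>s i)) = (\<Sum>i\<in>S'. ennreal (p i) * CfU (\<rho>s i))"
    by (rule sum.mono_neutral_right[OF fin sub]) (auto simp: S'_def)
  have "sum p S = sum p S'"
    by (rule sum.mono_neutral_right[OF fin sub]) (auto simp: S'_def)
  then have eqP: "sum p S' = 1" using s1 by simp
  have pos: "\<And>i. i \<in> S' \<Longrightarrow> 0 < p i" using nn by (force simp: S'_def)
  show ?thesis unfolding eqM eqR
  proof (rule ennreal_le_epsilon)
    fix e :: real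
    assume top: "(\<Sum>i\<in>S'. ennreal (p i) * CfU (\<rho>s i)) < top" and e: "0 < e"
    have fin_i: "CfU (\<rho>s i) < top" if i: "i \<in> S'" for i
    proof -
      have "ennreal (p i) * CfU (\<rho>s i) \<le> (\<Sum>i\<in>S'. ennreal (p i) * CfU (\<rho>s i))"
        by (rule member_le_sum[OF i]) (auto simp: fS')
      then have "ennreal (p i) * CfU (\<rho>s i) < top" using top by auto
      then show ?thesis using pos[OF i] by (auto simp: ennreal_mult_less_top top.not_eq_extremum)
    qed
    have "\<forall>i\<in>S'. \<exists>d::nat set \<times> (nat\<Rightarrow>real) \<times> (nat \<Rightarrow> complex^'n) \<times> (nat\<Rightarrow>nat). gdec (\<rho>s i) (fst d) (fst (snd d)) (fst (snd (snd d))) (snd (snd (snd d))) \<and>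
        ennreal (gcost (fst d) (fst (snd d)) (snd (snd (snd d)))) < CfU (\<rho>s i) + ennreal e"
    proof
      fix i assume i: "i \<in> S'"
      have "CfU (\<rho>s i) < CfU (\<rho>s i) + ennreal e" using fin_i[OF i] e
        by (cases "CfU (\<rho>s i)" rule: ennreal_cases) (auto simp flip: ennreal_plus simp: ennreal_less_iff)
      from CfU_less[OF this] obtain I :: "nat set" and pp \<psi> k where
        "gdec (\<rho>s i) I pp \<psi> k" "ennreal (gcost I pp k) < CfU (\<rho>s i) + ennreal e" by blast
      then show "\<exists>d::nat set \<times> (nat\<Rightarrow>real) \<times> (nat \<Rightarrow> complex^'n) \<times> (nat\<Rightarrow>nat). gdec (\<rho>s i) (fst d) (fst (snd d)) (fst (snd (snd d))) (snd (snd (snd d))) \<and>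
        ennreal (gcost (fst d) (fst (snd d)) (snd (snd (snd d)))) < CfU (\<rho>s i) + ennreal e"
        by (intro exI[of _ "(I, pp, \<psi>, k)"]) simp
    qed
    then obtain D :: "'i \<Rightarrow> nat set \<times> (nat\<Rightarrow>real) \<times> (nat \<Rightarrow> complex^'n) \<times> (nat\<Rightarrow>nat)" where D: "\<forall>i\<in>S'. gdec (\<rho>s i) (fst (D i)) (fst (snd (D i))) (fst (snd (snd (D i)))) (snd (snd (snd (D i)))) \<and>
        ennreal (gcost (fst (D i)) (fst (snd (D i))) (snd (snd (snd (D i))))) < CfU (\<rho>s i) + ennreal e"
      by (rule bchoice[elim_format]) blast
    define II where "II i = fst (D i)" for i
    define PP where "PP i = fst (snd (D i))" for i
    define SS where "SS i = fst (snd (snd (D i)))" for i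
    define KK where "KK i = snd (snd (snd (D i)))" for i
    have G: "\<And>i. i \<in> S' \<Longrightarrow> gdec (\<rho>s i) (II i) (PP i) (SS i) (KK i)"
      and C: "\<And>i. i \<in> S' \<Longrightarrow> ennreal (gcost (II i) (PP i) (KK i)) < CfU (\<rho>s i) + ennreal e"
      using D by (auto simp: II_def PP_def SS_def KK_def)
    have finII: "\<And>i. i \<in> S' \<Longrightarrow> finite (II i)" using G by (simp add: gdec_def)
    define T where "T = Sigma S' II"
    have "gdec (\<Sum>i\<in>S'. p i *\<^sub>R \<rho>s i) T (\<lambda>(i,a). p i * PP i a) (\<lambda>(i,a). SS i a) (\<lambda>(i,a). KK i a)"
    proof -
      have "finite T" using fS' finII by (simp add: T_def)
      moreover have "\<forall>x\<in>T. 0 \<le> (\<lambda>(i,a). p i * PP i a) x \<and> unif_coh ((\<lambda>(i,a). KK i a) x) ((\<lambda>(i,a). SS i a) x)"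
        using G pos by (auto simp: T_def gdec_def less_imp_le)
      moreover have "sum (\<lambda>(i,a). p i * PP i a) T = 1"
      proof -
        have "sum (\<lambda>(i,a). p i * PP i a) T = (\<Sum>i\<in>S'. \<Sum>a\<in>II i. p i * PP i a)"
          unfolding T_def by (rule sum.Sigma[symmetric]) (use fS' finII in auto)
        also have "\<dots> = (\<Sum>i\<in>S'. p i)"
          by (rule sum.cong) (use G in \<open>auto simp: gdec_def simp flip: sum_distrib_left\<close>)
        finally show ?thesis using eqP by simp
      qed
      moreover have "(\<Sum>i\<in>S'. p i *\<^sub>R \<rho>s i) = (\<Sum>x\<in>T. (\<lambda>(i,a). p i * PP i a) x *\<^sub>R outer ((\<lambda>(i,a). SS i a) x))"
      proof -
        have "(\<Sum>x\<in>T. (\<lambda>(i,a). p i * PP i a) x *\<^sub>R outer ((\<lambda>(i,a). SS i a) x))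
            = (\<Sum>i\<in>S'. \<Sum>a\<in>II i. (p i * PP i a) *\<^sub>R outer (SS i a))"
          unfolding T_def by (subst sum.Sigma) (use fS' finII in \<open>auto simp: split_def\<close>)
        also have "\<dots> = (\<Sum>i\<in>S'. p i *\<^sub>R \<rho>s i)"
          by (rule sum.cong) (use G in \<open>auto simp: gdec_def scaleR_sum_right\<close>)
        finally show ?thesis by simp
      qed
      ultimately show ?thesis unfolding gdec_def by blast
    qed
    then have "CfU (\<Sum>i\<in>S'. p i *\<^sub>R \<rho>s i) \<le> ennreal (gcost T (\<lambda>(i,a). p i * PP i a) (\<lambda>(i,a). KK i a))"
      by (rule gdec_CfU)
    also have "gcost T (\<lambda>(i,a). p i * PP i a) (\<lambda>(i,a). KK i a) = (\<Sum>i\<in>S'. p i * gcost (II i) (PP i) (KK i))"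
    proof -
      have "gcost T (\<lambda>(i,a). p i * PP i a) (\<lambda>(i,a). KK i a) = (\<Sum>i\<in>S'. \<Sum>a\<in>II i. p i * PP i a * log 2 (real (KK i a)))"
        unfolding T_def gcost_def by (subst sum.Sigma) (use fS' finII in \<open>auto simp: split_def\<close>)
      also have "\<dots> = (\<Sum>i\<in>S'. p i * gcost (II i) (PP i) (KK i))"
        by (simp add: gcost_def sum_distrib_left mult.assoc)
      finally show ?thesis .
    qed
    also have "ennreal (\<Sum>i\<in>S'. p i * gcost (II i) (PP i) (KK i)) = (\<Sum>i\<in>S'. ennreal (p i) * ennreal (gcost (II i) (PP i) (KK i)))"
    proof -
      have "ennreal (\<Sum>i\<in>S'. p i * gcost (II i) (PP i) (KK i)) = (\<Sum>i\<in>S'. ennreal (p i * gcost (II i) (PP i) (KK i)))"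
        by (rule sum_ennreal[symmetric]) (use pos G gcost_nonneg in \<open>force intro: mult_nonneg_nonneg less_imp_le\<close>)
      also have "\<dots> = (\<Sum>i\<in>S'. ennreal (p i) * ennreal (gcost (II i) (PP i) (KK i)))"
        by (rule sum.cong) (use pos in \<open>auto intro: ennreal_mult' less_imp_le\<close>)
      finally show ?thesis .
    qed
    also have "\<dots> \<le> (\<Sum>i\<in>S'. ennreal (p i) * (CfU (\<rho>s i) + ennreal e))"
      using C by (intro sum_mono mult_left_mono) (auto simp: less_imp_le)
    also have "\<dots> = (\<Sum>i\<in>S'. ennreal (p i) * CfU (\<rho>s i)) + (\<Sum>i\<in>S'. ennreal (p i)) * ennreal e"
      by (simp add: distrib_left sum.distrib sum_distrib_right)
    also have "(\<Sum>i\<in>S'. ennreal (p i)) = 1"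
      using pos eqP by (subst sum_ennreal) (auto simp: less_imp_le)
    finally show "CfU (\<Sum>i\<in>S'. p i *\<^sub>R \<rho>s i) \<le> (\<Sum>i\<in>S'. ennreal (p i) * CfU (\<rho>s i)) + ennreal e" by simp
  qed
qed


lemma f_nonneg:
  assumes "gdec \<rho> I pp \<psi> k"
  shows "0 \<le> (\<Sum>x\<in>I. pp x * (real (card (supp (\<psi> x) \<inter> P)) / real (k x)) * log 2 (real (card (supp (\<psi> x) \<inter> P))))"
proof (intro sum_nonneg)
  fix x assume "x \<in> I"
  then have "0 \<le> pp x" using assms by (simp add: gdec_def)
  then show "0 \<le> pp x * (real (card (supp (\<psi> x) \<inter> P)) / real (k x)) * log 2 (real (card (supp (\<psi> x) \<inter> P)))"
  proof (cases "card (supp (\<psi> x) \<inter> P) = 0")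
    case True then show ?thesis by simp
  next
    case False
    then have "1 \<le> real (card (supp (\<psi> x) \<inter> P))" by linarith
    then have "0 \<le> log 2 (real (card (supp (\<psi> x) \<inter> P)))" by (subst zero_le_log_cancel_iff) auto
    then show ?thesis using \<open>0 \<le> pp x\<close> by (intro mult_nonneg_nonneg divide_nonneg_nonneg) auto
  qed
qed

lemma pio_main:
  fixes \<rho> :: "complex^'n^'n" and A :: "nat set" and p :: "nat \<Rightarrow> real" and B :: "nat \<Rightarrow> nat set"
    and I :: "nat \<Rightarrow> nat \<Rightarrow> 'n set" and U :: "nat \<Rightarrow> nat \<Rightarrow> complex^'n^'n"
  assumes S: "is_state \<rho>" and fA: "finite A" and pn: "\<forall>a\<in>A. 0 \<le> p a" and p1: "sum p A = 1"
    and part: "\<forall>a\<in>A. finite (B a) \<and> (\<forall>i. \<exists>!b. b \<in> B a \<and> i \<in> I a b)"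
    and Uu: "\<forall>a\<in>A. \<forall>b\<in>B a. incoh_unitary (U a b)"
  shows "let q = (\<lambda>a b. Re (trace (\<rho> ** incoh_proj (I a b))));
           K = (\<lambda>a b. U a b ** incoh_proj (I a b) ** \<rho> ** incoh_proj (I a b) ** adj (U a b));
           mid = (\<Sum>a\<in>A. \<Sum>b\<in>{b\<in>B a. q a b \<noteq> 0}.
                    ennreal (p a * q a b) * CfU ((1 / q a b) *\<^sub>R K a b))
       in CfU (\<Sum>a\<in>A. \<Sum>b\<in>B a. p a *\<^sub>R K a b) \<le> mid \<and> mid \<le> CfU \<rho>"
proof -
  define q where "q = (\<lambda>a b. Re (trace (\<rho> ** incoh_proj (I a b))))"
  define K where "K = (\<lambda>a b. U a b ** incoh_proj (I a b) ** \<rho> ** incoh_proj (I a b) ** adj (U a b))"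
  define Bq where "Bq a = {b\<in>B a. q a b \<noteq> 0}" for a
  define mid where "mid = (\<Sum>a\<in>A. \<Sum>b\<in>Bq a. ennreal (p a * q a b) * CfU ((1 / q a b) *\<^sub>R K a b))"
  have fB: "\<And>a. a \<in> A \<Longrightarrow> finite (B a)" using part by blast
  have fBq: "\<And>a. a \<in> A \<Longrightarrow> finite (Bq a)" using fB by (simp add: Bq_def)
  have subB: "\<And>a. Bq a \<subseteq> B a" by (auto simp: Bq_def)
  have qnn: "\<And>a b. 0 \<le> q a b" unfolding q_def using q_nonneg[OF S] by blast
  have K0: "\<And>a b. q a b = 0 \<Longrightarrow> K a b = 0" unfolding q_def K_def using q_zero[OF S] by blast
  have qsum: "(\<Sum>b\<in>B a. q a b) = 1" if a: "a \<in> A" for a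
  proof -
    have "(\<Sum>b\<in>B a. q a b) = (\<Sum>b\<in>B a. (\<Sum>i\<in>UNIV \<inter> I a b. Re (\<rho> $ i $ i)))"
      by (simp add: q_def trace_proj Re_sum)
    also have "\<dots> = (\<Sum>i\<in>UNIV. Re (\<rho> $ i $ i))"
      by (rule partition_sum) (use part a in auto)
    also have "\<dots> = Re (trace \<rho>)" by (simp add: trace_def Re_sum)
    also have "\<dots> = 1" using S by (simp add: is_state_def)
    finally show ?thesis .
  qed
  define T where "T = Sigma A Bq"
  have fT: "finite T" using fA fBq by (simp add: T_def)
  have part1: "CfU (\<Sum>a\<in>A. \<Sum>b\<in>B a. p a *\<^sub>R K a b) \<le> mid"
  proof -
    have eq1: "(\<Sum>a\<in>A. \<Sum>b\<in>B a. p a *\<^sub>R K a b) = (\<Sum>x\<in>T. (\<lambda>(a,b). p a * q a b) x *\<^sub>R (\<lambda>(a,b). (1 / q a b) *\<^sub>R K a b) x)"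
    proof -
      have "(\<Sum>a\<in>A. \<Sum>b\<in>B a. p a *\<^sub>R K a b) = (\<Sum>a\<in>A. \<Sum>b\<in>Bq a. p a *\<^sub>R K a b)"
      proof (rule sum.cong[OF refl])
        fix a assume a: "a \<in> A"
        show "(\<Sum>b\<in>B a. p a *\<^sub>R K a b) = (\<Sum>b\<in>Bq a. p a *\<^sub>R K a b)"
          by (rule sum.mono_neutral_right[OF fB[OF a] subB]) (auto simp: Bq_def K0)
      qed
      also have "\<dots> = (\<Sum>a\<in>A. \<Sum>b\<in>Bq a. (p a * q a b) *\<^sub>R ((1 / q a b) *\<^sub>R K a b))"
        by (intro sum.cong refl) (auto simp: Bq_def)
      also have "\<dots> = (\<Sum>x\<in>T. (\<lambda>(a,b). p a * q a b) x *\<^sub>R (\<lambda>(a,b). (1 / q a b) *\<^sub>R K a b) x)"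
        unfolding T_def by (subst sum.Sigma) (use fA fBq in \<open>auto simp: split_def\<close>)
      finally show ?thesis .
    qed
    have w1: "sum (\<lambda>(a,b). p a * q a b) T = 1"
    proof -
      have "sum (\<lambda>(a,b). p a * q a b) T = (\<Sum>a\<in>A. \<Sum>b\<in>Bq a. p a * q a b)"
        unfolding T_def by (subst sum.Sigma) (use fA fBq in \<open>auto simp: split_def\<close>)
      also have "\<dots> = (\<Sum>a\<in>A. \<Sum>b\<in>B a. p a * q a b)"
      proof (rule sum.cong[OF refl])
        fix a assume a: "a \<in> A"
        show "(\<Sum>b\<in>Bq a. p a * q a b) = (\<Sum>b\<in>B a. p a * q a b)"
          by (rule sum.mono_neutral_left[OF fB[OF a] subB]) (auto simp: Bq_def)
      qed
      also have "\<dots> = (\<Sum>a\<in>A. p a)"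
        by (rule sum.cong[OF refl]) (simp add: qsum flip: sum_distrib_left)
      finally show ?thesis using p1 by simp
    qed
    have wn: "\<forall>x\<in>T. 0 \<le> (\<lambda>(a,b). p a * q a b) x" using pn qnn by (auto simp: T_def)
    have "CfU (\<Sum>x\<in>T. (\<lambda>(a,b). p a * q a b) x *\<^sub>R (\<lambda>(a,b). (1 / q a b) *\<^sub>R K a b) x)
        \<le> (\<Sum>x\<in>T. ennreal ((\<lambda>(a,b). p a * q a b) x) * CfU ((\<lambda>(a,b). (1 / q a b) *\<^sub>R K a b) x))"
      by (rule CfU_convex[OF fT wn w1])
    also have "\<dots> = mid"
      unfolding mid_def T_def by (subst sum.Sigma) (use fA fBq in \<open>auto simp: split_def\<close>)
    finally show ?thesis using eq1 by simp
  qed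
  have part2: "mid \<le> CfU \<rho>"
  proof (rule CfU_lower)
    fix II :: "nat set" and pp \<psi> k
    assume G: "gdec \<rho> II pp \<psi> k"
    define f where "f a b = (\<Sum>x\<in>II. pp x * (real (card (supp (\<psi> x) \<inter> I a b)) / real (k x)) * log 2 (real (card (supp (\<psi> x) \<inter> I a b))))" for a b
    have f0: "\<And>a b. 0 \<le> f a b" unfolding f_def by (rule f_nonneg[OF G])
    have "mid \<le> (\<Sum>a\<in>A. \<Sum>b\<in>Bq a. ennreal (p a * f a b))"
      unfolding mid_def
    proof (rule sum_mono, rule sum_mono)
      fix a b assume a: "a \<in> A" and b: "b \<in> Bq a"
      have qn: "q a b \<noteq> 0" and bB: "b \<in> B a" using b by (auto simp: Bq_def)
      have "ennreal (q a b) * CfU ((1 / q a b) *\<^sub>R K a b) \<le> ennreal (f a b)"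
        unfolding f_def K_def using pio_bound[OF G bspec[OF bspec[OF Uu a] bB] _ qn[unfolded q_def]]
        by (simp add: q_def)
      then have "ennreal (p a) * (ennreal (q a b) * CfU ((1 / q a b) *\<^sub>R K a b)) \<le> ennreal (p a) * ennreal (f a b)"
        by (rule mult_left_mono) simp
      then show "ennreal (p a * q a b) * CfU ((1 / q a b) *\<^sub>R K a b) \<le> ennreal (p a * f a b)"
        using pn a qnn f0 by (simp add: ennreal_mult mult.assoc)
    qed
    also have "\<dots> = ennreal (\<Sum>a\<in>A. \<Sum>b\<in>Bq a. p a * f a b)"
    proof -
      have "(\<Sum>a\<in>A. \<Sum>b\<in>Bq a. ennreal (p a * f a b)) = (\<Sum>a\<in>A. ennreal (\<Sum>b\<in>Bq a. p a * f a b))"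
        by (rule sum.cong[OF refl], rule sum_ennreal) (use pn f0 in auto)
      also have "\<dots> = ennreal (\<Sum>a\<in>A. \<Sum>b\<in>Bq a. p a * f a b)"
        by (rule sum_ennreal) (use pn f0 in \<open>auto intro!: sum_nonneg\<close>)
      finally show ?thesis .
    qed
    also have "\<dots> \<le> ennreal (gcost II pp k)"
    proof (rule ennreal_leI)
      have "(\<Sum>a\<in>A. \<Sum>b\<in>Bq a. p a * f a b) \<le> (\<Sum>a\<in>A. \<Sum>b\<in>B a. p a * f a b)"
        by (rule sum_mono, rule sum_mono2) (use fB subB pn f0 in auto)
      also have "\<dots> = (\<Sum>a\<in>A. p a * (\<Sum>b\<in>B a. f a b))" by (simp add: sum_distrib_left)
      also have "\<dots> \<le> (\<Sum>a\<in>A. p a * gcost II pp k)"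
      proof (rule sum_mono)
        fix a assume a: "a \<in> A"
        have "(\<Sum>b\<in>B a. f a b) \<le> gcost II pp k"
          unfolding f_def by (rule pio_sum[OF G]) (use part a in auto)
        then show "p a * (\<Sum>b\<in>B a. f a b) \<le> p a * gcost II pp k" using pn a by (simp add: mult_left_mono)
      qed
      also have "\<dots> = gcost II pp k" using p1 by (simp flip: sum_distrib_right)
      finally show "(\<Sum>a\<in>A. \<Sum>b\<in>Bq a. p a * f a b) \<le> gcost II pp k" .
    qed
    finally show "mid \<le> ennreal (gcost II pp k)" .
  qed
  show ?thesis using part1 part2 unfolding Let_def q_def K_def mid_def Bq_def by simp
qed


lemma gdec_build:
  fixes T :: "'i set" and M :: "complex^'n^'n"
  assumes fT: "finite T" and wn: "\<forall>t\<in>T. 0 \<le> w t" and uc: "\<forall>t\<in>T. w t \<noteq> 0 \<longrightarrow> unif_coh (kk t) (\<phi> t)"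
    and w1: "sum w T = 1" and M: "M = (\<Sum>t\<in>T. w t *\<^sub>R outer (\<phi> t))"
  shows "CfU M \<le> ennreal (\<Sum>t\<in>T. w t * log 2 (real (kk t)))"
proof -
  define T' where "T' = {t\<in>T. w t \<noteq> 0}"
  have sub: "T' \<subseteq> T" by (auto simp: T'_def)
  have "gdec M T' w \<phi> kk" unfolding gdec_def
  proof (intro conjI)
    show "finite T'" using fT sub finite_subset by blast
    show "\<forall>a\<in>T'. 0 \<le> w a \<and> unif_coh (kk a) (\<phi> a)" using wn uc by (auto simp: T'_def)
    show "sum w T' = 1" using w1 sum.mono_neutral_left[OF fT sub, of w] by (auto simp: T'_def)
    show "M = (\<Sum>a\<in>T'. w a *\<^sub>R outer (\<phi> a))" unfolding M
      by (rule sum.mono_neutral_right[OF fT sub]) (auto simp: T'_def)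
  qed
  then have "CfU M \<le> ennreal (gcost T' w kk)" by (rule gdec_CfU)
  also have "gcost T' w kk = (\<Sum>t\<in>T. w t * log 2 (real (kk t)))"
    unfolding gcost_def by (rule sum.mono_neutral_left[OF fT sub]) (auto simp: T'_def)
  finally show ?thesis .
qed

lemma sum_fiber:
  fixes g :: "'x \<Rightarrow> 'y::finite" and h :: "'y \<Rightarrow> real"
  assumes "finite S"
  shows "(\<Sum>x\<in>S. h (g x)) = (\<Sum>y\<in>UNIV. real (card {x\<in>S. g x = y}) * h y)"
proof -
  have "(\<Sum>x\<in>S. h (g x)) = (\<Sum>y\<in>UNIV. \<Sum>x\<in>{x\<in>S. g x = y}. h (g x))"
    by (rule sum.group[symmetric]) (use assms in auto)
  also have "\<dots> = (\<Sum>y\<in>UNIV. \<Sum>x\<in>{x\<in>S. g x = y}. h y)"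
    by (intro sum.cong refl) auto
  also have "\<dots> = (\<Sum>y\<in>UNIV. real (card {x\<in>S. g x = y}) * h y)" by simp
  finally show ?thesis .
qed

lemma card_col: "card {x\<in>S. snd x = j} = card {i. (i, j) \<in> S}"
proof -
  have "{x\<in>S. snd x = j} = (\<lambda>i. (i, j)) ` {i. (i, j) \<in> S}" by force
  then show ?thesis by (simp add: card_image inj_on_def)
qed

lemma card_row: "card {x\<in>S. fst x = i} = card {j. (i, j) \<in> S}"
proof -
  have "{x\<in>S. fst x = i} = (\<lambda>j. (i, j)) ` {j. (i, j) \<in> S}" by force
  then show ?thesis by (simp add: card_image inj_on_def)
qed

lemma entropy_ineq:
  fixes S :: "('a::finite \<times> 'b::finite) set"
  assumes fS: "finite S" and ne: "S \<noteq> {}"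
  shows "(\<Sum>j\<in>UNIV. real (card {i. (i,j)\<in>S}) * log 2 (real (card {i. (i,j)\<in>S})))
       + (\<Sum>i\<in>UNIV. real (card {j. (i,j)\<in>S}) * log 2 (real (card {j. (i,j)\<in>S})))
       \<le> real (card S) * log 2 (real (card S))"
proof -
  define col where "col j = real (card {i. (i,j)\<in>S})" for j
  define row where "row i = real (card {j. (i,j)\<in>S})" for i
  define c where "c = real (card S)"
  have cpos: "0 < c" using fS ne by (simp add: c_def card_gt_0_iff)
  have E1: "(\<Sum>j\<in>UNIV. col j * h (col j)) = (\<Sum>x\<in>S. h (col (snd x)))" for h
    using sum_fiber[OF fS, of "\<lambda>j. h (col j)" snd] by (simp add: card_col col_def)
  have E2: "(\<Sum>i\<in>UNIV. row i * h (row i)) = (\<Sum>x\<in>S. h (row (fst x)))" for h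
    using sum_fiber[OF fS, of "\<lambda>i. h (row i)" fst] by (simp add: card_row row_def)
  have scol: "(\<Sum>j\<in>UNIV. col j) = c"
    using sum_fiber[OF fS, of "\<lambda>_. 1" snd] by (simp add: card_col col_def c_def)
  have srow: "(\<Sum>i\<in>UNIV. row i) = c"
    using sum_fiber[OF fS, of "\<lambda>_. 1" fst] by (simp add: card_row row_def c_def)
  have colpos: "x \<in> S \<Longrightarrow> 0 < col (snd x)" for x
    unfolding col_def using fS by (cases x) (auto simp: card_gt_0_iff intro: finite_subset[of _ "fst ` S"] )
  have rowpos: "x \<in> S \<Longrightarrow> 0 < row (fst x)" for x
    unfolding row_def using fS by (cases x) (auto simp: card_gt_0_iff intro: finite_subset[of _ "snd ` S"] )
  have pt: "log 2 (col (snd x)) + log 2 (row (fst x)) \<le> log 2 c + (col (snd x) * row (fst x) / c - 1) / ln 2"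
    if x: "x \<in> S" for x
  proof -
    have a: "0 < col (snd x)" "0 < row (fst x)" using colpos[OF x] rowpos[OF x] .
    have "log 2 (col (snd x)) + log 2 (row (fst x)) - log 2 c = log 2 (col (snd x) * row (fst x) / c)"
      using a cpos by (simp add: log_mult log_divide)
    also have "\<dots> = ln (col (snd x) * row (fst x) / c) / ln 2" by (simp add: log_def)
    also have "\<dots> \<le> (col (snd x) * row (fst x) / c - 1) / ln 2"
      by (rule divide_right_mono) (use a cpos in \<open>auto intro!: ln_le_minus_one\<close>)
    finally show ?thesis by simp
  qed
  have prod: "(\<Sum>x\<in>S. col (snd x) * row (fst x)) \<le> c * c"
  proof -
    have "(\<Sum>x\<in>S. col (snd x) * row (fst x)) \<le> (\<Sum>x\<in>UNIV. col (snd x) * row (fst x))"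
      by (rule sum_mono2) (auto simp: col_def row_def)
    also have "\<dots> = (\<Sum>i\<in>UNIV. \<Sum>j\<in>UNIV. col j * row i)"
      by (simp add: UNIV_Times_UNIV[symmetric] sum.cartesian_product split_def del: UNIV_Times_UNIV)
    also have "\<dots> = (\<Sum>i\<in>UNIV. row i) * (\<Sum>j\<in>UNIV. col j)"
      by (simp add: sum_product mult.commute)
    finally show ?thesis using scol srow by simp
  qed
  have "(\<Sum>j\<in>UNIV. col j * log 2 (col j)) + (\<Sum>i\<in>UNIV. row i * log 2 (row i))
      = (\<Sum>x\<in>S. log 2 (col (snd x)) + log 2 (row (fst x)))"
    by (simp add: E1 E2 sum.distrib)
  also have "\<dots> \<le> (\<Sum>x\<in>S. log 2 c + (col (snd x) * row (fst x) / c - 1) / ln 2)"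
    by (rule sum_mono) (rule pt)
  also have "\<dots> = c * log 2 c + ((\<Sum>x\<in>S. col (snd x) * row (fst x)) / c - c) / ln 2"
    by (simp add: sum.distrib sum_subtractf sum_divide_distrib[symmetric] c_def diff_divide_distrib)
  also have "\<dots> \<le> c * log 2 c + (c * c / c - c) / ln 2"
    using prod cpos by (intro add_left_mono divide_right_mono diff_right_mono) (auto simp: divide_right_mono)
  also have "\<dots> = c * log 2 c" using cpos by simp
  finally show ?thesis by (simp add: col_def row_def c_def)
qed


lemma ptrace_B_sum: "ptrace_B (\<Sum>t\<in>T. c t *\<^sub>R M t) = (\<Sum>t\<in>T. c t *\<^sub>R ptrace_B (M t))"
proof -
  have e: "\<And>i k. (\<Sum>j\<in>UNIV. \<Sum>t\<in>T. c t *\<^sub>R M t $ (i,j) $ (k,j)) = (\<Sum>t\<in>T. \<Sum>j\<in>UNIV. c t *\<^sub>R M t $ (i,j) $ (k,j))"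
    by (rule sum.swap)
  show ?thesis by (simp add: vec_eq_iff ptrace_B_def scaleR_sum_right e)
qed

lemma ptrace_A_sum: "ptrace_A (\<Sum>t\<in>T. c t *\<^sub>R M t) = (\<Sum>t\<in>T. c t *\<^sub>R ptrace_A (M t))"
proof -
  have e: "\<And>j l. (\<Sum>i\<in>UNIV. \<Sum>t\<in>T. c t *\<^sub>R M t $ (i,j) $ (i,l)) = (\<Sum>t\<in>T. \<Sum>i\<in>UNIV. c t *\<^sub>R M t $ (i,j) $ (i,l))"
    by (rule sum.swap)
  show ?thesis by (simp add: vec_eq_iff ptrace_A_def scaleR_sum_right e)
qed
lemma ptrace_B_outer: "ptrace_B (outer v) = (\<Sum>j\<in>UNIV. outer (\<chi> i. v $ (i, j)))"
  by (simp add: vec_eq_iff ptrace_B_def outer_def)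

lemma ptrace_A_outer: "ptrace_A (outer v) = (\<Sum>i\<in>UNIV. outer (\<chi> j. v $ (i, j)))"
  by (simp add: vec_eq_iff ptrace_A_def outer_def)

lemma col_upv:
  fixes S :: "('a::finite \<times> 'b::finite) set"
  shows "(\<chi> i. upv S z $ (i, j)) = sqrt (real (card {i. (i,j)\<in>S}) / real (card S)) *\<^sub>R upv {i. (i,j)\<in>S} (\<chi> i. z $ (i, j))"
proof (rule iffD2[OF vec_eq_iff], rule allI)
  fix i
  show "(\<chi> i. upv S z $ (i, j)) $ i = (sqrt (real (card {i. (i,j)\<in>S}) / real (card S)) *\<^sub>R upv {i. (i,j)\<in>S} (\<chi> i. z $ (i, j))) $ i"
  proof (cases "(i, j) \<in> S")
    case True
    then show ?thesis using scale_core[of "{i. (i,j)\<in>S}" i "z $ (i,j)" "card S"] by (simp add: upv_def)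
  next
    case False then show ?thesis by (simp add: upv_def)
  qed
qed

lemma row_upv:
  fixes S :: "('a::finite \<times> 'b::finite) set"
  shows "(\<chi> j. upv S z $ (i, j)) = sqrt (real (card {j. (i,j)\<in>S}) / real (card S)) *\<^sub>R upv {j. (i,j)\<in>S} (\<chi> j. z $ (i, j))"
proof (rule iffD2[OF vec_eq_iff], rule allI)
  fix j
  show "(\<chi> j. upv S z $ (i, j)) $ j = (sqrt (real (card {j. (i,j)\<in>S}) / real (card S)) *\<^sub>R upv {j. (i,j)\<in>S} (\<chi> j. z $ (i, j))) $ j"
  proof (cases "(i, j) \<in> S")
    case True
    then show ?thesis using scale_core[of "{j. (i,j)\<in>S}" j "z $ (i,j)" "card S"] by (simp add: upv_def)
  next
    case False then show ?thesis by (simp add: upv_def)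
  qed
qed

lemma sum_col: "finite S \<Longrightarrow> (\<Sum>j\<in>UNIV. real (card {i. (i,j)\<in>S})) = real (card (S::('a \<times> 'b::finite) set))"
  using sum_fiber[of S "\<lambda>_. 1" snd] by (simp add: card_col)

lemma sum_row: "finite S \<Longrightarrow> (\<Sum>i\<in>UNIV. real (card {j. (i,j)\<in>S})) = real (card (S::('a::finite \<times> 'b) set))"
  using sum_fiber[of S "\<lambda>_. 1" fst] by (simp add: card_row)

lemma gdec_Z:
  assumes G: "gdec \<rho> I p \<psi> k"
  obtains Z where "\<And>x. x \<in> I \<Longrightarrow> (\<forall>j. cmod (Z x $ j) = 1) \<and> \<psi> x = upv (supp (\<psi> x)) (Z x) \<and>
     k x = card (supp (\<psi> x)) \<and> supp (\<psi> x) \<noteq> {}"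
proof -
  have "\<forall>x\<in>I. \<exists>z. (\<forall>j. cmod (z $ j) = 1) \<and> \<psi> x = upv (supp (\<psi> x)) z \<and> k x = card (supp (\<psi> x)) \<and> supp (\<psi> x) \<noteq> {}"
  proof
    fix x assume "x \<in> I"
    then have "unif_coh (k x) (\<psi> x)" using G by (simp add: gdec_def)
    then obtain z where "\<forall>j. cmod (z $ j) = 1" "\<psi> x = upv (supp (\<psi> x)) z" "k x = card (supp (\<psi> x))" "supp (\<psi> x) \<noteq> {}"
      by (rule unif_cohE)
    then show "\<exists>z. (\<forall>j. cmod (z $ j) = 1) \<and> \<psi> x = upv (supp (\<psi> x)) z \<and> k x = card (supp (\<psi> x)) \<and> supp (\<psi> x) \<noteq> {}"
      by blast
  qed
  then obtain Z where "\<forall>x\<in>I. (\<forall>j. cmod (Z x $ j) = 1) \<and> \<psi> x = upv (supp (\<psi> x)) (Z x) \<and> k x = card (supp (\<psi> x)) \<and> supp (\<psi> x) \<noteq> {}"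
    by (rule bchoice[elim_format]) blast
  then show ?thesis using that by blast
qed

lemma ptrace_B_bound:
  fixes R :: "complex^('a::finite\<times>'b::finite)^('a\<times>'b)" and II :: "'i set"
  assumes G: "gdec R II pp \<psi> k"
  shows "CfU (ptrace_B R) \<le> ennreal (\<Sum>x\<in>II. pp x / real (k x) *
      (\<Sum>j\<in>UNIV. real (card {i. (i,j)\<in>supp (\<psi> x)}) * log 2 (real (card {i. (i,j)\<in>supp (\<psi> x)}))))"
proof -
  obtain Z where Z: "\<And>x. x \<in> II \<Longrightarrow> (\<forall>j. cmod (Z x $ j) = 1) \<and> \<psi> x = upv (supp (\<psi> x)) (Z x) \<and>
     k x = card (supp (\<psi> x)) \<and> supp (\<psi> x) \<noteq> {}" using gdec_Z[OF G] by blast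
  have fin: "finite II" and nn: "\<And>x. x \<in> II \<Longrightarrow> 0 \<le> pp x" and p1: "sum pp II = 1"
    and R: "R = (\<Sum>x\<in>II. pp x *\<^sub>R outer (\<psi> x))" using G by (auto simp: gdec_def)
  have Zn: "\<And>x. x \<in> II \<Longrightarrow> \<forall>j. cmod (Z x $ j) = 1" and Zeq: "\<And>x. x \<in> II \<Longrightarrow> \<psi> x = upv (supp (\<psi> x)) (Z x)"
    and Zk: "\<And>x. x \<in> II \<Longrightarrow> k x = card (supp (\<psi> x))" and Zne: "\<And>x. x \<in> II \<Longrightarrow> supp (\<psi> x) \<noteq> {}"
    using Z by blast+
  define col where "col x j = card {i. (i,j)\<in>supp (\<psi> x)}" for x j
  define T where "T = II \<times> (UNIV :: 'b set)"
  define w where "w t = pp (fst t) * real (col (fst t) (snd t)) / real (k (fst t))" for t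
  define \<phi> where "\<phi> t = upv {i. (i, snd t)\<in>supp (\<psi> (fst t))} (\<chi> i. Z (fst t) $ (i, snd t))" for t
  define kk where "kk t = col (fst t) (snd t)" for t
  have fT: "finite T" using fin by (simp add: T_def)
  have kpos: "x \<in> II \<Longrightarrow> 0 < real (k x)" for x using Zk[of x] Zne[of x] by (simp add: card_gt_0_iff)
  have "CfU (ptrace_B R) \<le> ennreal (\<Sum>t\<in>T. w t * log 2 (real (kk t)))"
  proof (rule gdec_build[OF fT])
    show "\<forall>t\<in>T. 0 \<le> w t" using nn kpos by (auto simp: T_def w_def)
    show "\<forall>t\<in>T. w t \<noteq> 0 \<longrightarrow> unif_coh (kk t) (\<phi> t)"
    proof (intro ballI impI)
      fix t assume t: "t \<in> T" "w t \<noteq> 0"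
      then have "col (fst t) (snd t) \<noteq> 0" by (auto simp: w_def)
      then have "{i. (i, snd t)\<in>supp (\<psi> (fst t))} \<noteq> {}" by (auto simp: col_def)
      moreover have "\<forall>i. cmod ((\<chi> i. Z (fst t) $ (i, snd t)) $ i) = 1" using Zn t(1) by (auto simp: T_def)
      ultimately show "unif_coh (kk t) (\<phi> t)" unfolding \<phi>_def kk_def col_def by (rule upv_unif)
    qed
    show "sum w T = 1"
    proof -
      have "sum w T = (\<Sum>x\<in>II. \<Sum>j\<in>UNIV. pp x * real (col x j) / real (k x))"
        unfolding T_def w_def by (simp add: sum.cartesian_product split_def)
      also have "\<dots> = (\<Sum>x\<in>II. pp x / real (k x) * (\<Sum>j\<in>UNIV. real (col x j)))"
        by (simp add: sum_distrib_left)
      also have "\<dots> = (\<Sum>x\<in>II. pp x)"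
      proof (rule sum.cong[OF refl])
        fix x assume x: "x \<in> II"
        have "(\<Sum>j\<in>UNIV. real (col x j)) = real (k x)"
          unfolding col_def using sum_col[of "supp (\<psi> x)"] Zk[OF x] by simp
        then show "pp x / real (k x) * (\<Sum>j\<in>UNIV. real (col x j)) = pp x" using kpos[OF x] by simp
      qed
      finally show ?thesis using p1 by simp
    qed
    show "ptrace_B R = (\<Sum>t\<in>T. w t *\<^sub>R outer (\<phi> t))"
    proof -
      have "ptrace_B R = (\<Sum>x\<in>II. pp x *\<^sub>R ptrace_B (outer (\<psi> x)))" by (simp add: R ptrace_B_sum)
      also have "\<dots> = (\<Sum>x\<in>II. \<Sum>j\<in>UNIV. w (x, j) *\<^sub>R outer (\<phi> (x, j)))"
      proof (rule sum.cong[OF refl])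
        fix x assume x: "x \<in> II"
        have "ptrace_B (outer (\<psi> x)) = ptrace_B (outer (upv (supp (\<psi> x)) (Z x)))"
          using arg_cong[OF Zeq[OF x], of "\<lambda>v. ptrace_B (outer v)"] by simp
        also have "\<dots> = (\<Sum>j\<in>UNIV. (real (col x j) / real (k x)) *\<^sub>R outer (\<phi> (x, j)))"
          unfolding ptrace_B_outer col_upv using Zk[OF x]
          by (simp add: outer_scaleR \<phi>_def col_def)
        finally show "pp x *\<^sub>R ptrace_B (outer (\<psi> x)) = (\<Sum>j\<in>UNIV. w (x, j) *\<^sub>R outer (\<phi> (x, j)))"
          by (simp add: scaleR_sum_right w_def)
      qed
      also have "\<dots> = (\<Sum>t\<in>T. w t *\<^sub>R outer (\<phi> t))"
        unfolding T_def by (simp add: sum.cartesian_product split_def)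
      finally show ?thesis .
    qed
  qed
  also have "(\<Sum>t\<in>T. w t * log 2 (real (kk t))) = (\<Sum>x\<in>II. pp x / real (k x) *
      (\<Sum>j\<in>UNIV. real (card {i. (i,j)\<in>supp (\<psi> x)}) * log 2 (real (card {i. (i,j)\<in>supp (\<psi> x)}))))"
    unfolding T_def w_def kk_def col_def by (simp add: sum.cartesian_product split_def sum_distrib_left mult_ac)
  finally show ?thesis .
qed


lemma ptrace_A_bound:
  fixes R :: "complex^('a::finite\<times>'b::finite)^('a\<times>'b)" and II :: "'i set"
  assumes G: "gdec R II pp \<psi> k"
  shows "CfU (ptrace_A R) \<le> ennreal (\<Sum>x\<in>II. pp x / real (k x) *
      (\<Sum>i\<in>UNIV. real (card {j. (i,j)\<in>supp (\<psi> x)}) * log 2 (real (card {j. (i,j)\<in>supp (\<psi> x)}))))"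
proof -
  obtain Z where Z: "\<And>x. x \<in> II \<Longrightarrow> (\<forall>j. cmod (Z x $ j) = 1) \<and> \<psi> x = upv (supp (\<psi> x)) (Z x) \<and>
     k x = card (supp (\<psi> x)) \<and> supp (\<psi> x) \<noteq> {}" using gdec_Z[OF G] by blast
  have fin: "finite II" and nn: "\<And>x. x \<in> II \<Longrightarrow> 0 \<le> pp x" and p1: "sum pp II = 1"
    and R: "R = (\<Sum>x\<in>II. pp x *\<^sub>R outer (\<psi> x))" using G by (auto simp: gdec_def)
  have Zn: "\<And>x. x \<in> II \<Longrightarrow> \<forall>j. cmod (Z x $ j) = 1" and Zeq: "\<And>x. x \<in> II \<Longrightarrow> \<psi> x = upv (supp (\<psi> x)) (Z x)"
    and Zk: "\<And>x. x \<in> II \<Longrightarrow> k x = card (supp (\<psi> x))" and Zne: "\<And>x. x \<in> II \<Longrightarrow> supp (\<psi> x) \<noteq> {}"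
    using Z by blast+
  define col where "col x i = card {j. (i,j)\<in>supp (\<psi> x)}" for x i
  define T where "T = II \<times> (UNIV :: 'a set)"
  define w where "w t = pp (fst t) * real (col (fst t) (snd t)) / real (k (fst t))" for t
  define \<phi> where "\<phi> t = upv {j. (snd t, j)\<in>supp (\<psi> (fst t))} (\<chi> j. Z (fst t) $ (snd t, j))" for t
  define kk where "kk t = col (fst t) (snd t)" for t
  have fT: "finite T" using fin by (simp add: T_def)
  have kpos: "x \<in> II \<Longrightarrow> 0 < real (k x)" for x using Zk[of x] Zne[of x] by (simp add: card_gt_0_iff)
  have "CfU (ptrace_A R) \<le> ennreal (\<Sum>t\<in>T. w t * log 2 (real (kk t)))"
  proof (rule gdec_build[OF fT])
    show "\<forall>t\<in>T. 0 \<le> w t" using nn kpos by (auto simp: T_def w_def)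
    show "\<forall>t\<in>T. w t \<noteq> 0 \<longrightarrow> unif_coh (kk t) (\<phi> t)"
    proof (intro ballI impI)
      fix t assume t: "t \<in> T" "w t \<noteq> 0"
      then have "col (fst t) (snd t) \<noteq> 0" by (auto simp: w_def)
      then have "{j. (snd t, j)\<in>supp (\<psi> (fst t))} \<noteq> {}" by (auto simp: col_def)
      moreover have "\<forall>j. cmod ((\<chi> j. Z (fst t) $ (snd t, j)) $ j) = 1" using Zn t(1) by (auto simp: T_def)
      ultimately show "unif_coh (kk t) (\<phi> t)" unfolding \<phi>_def kk_def col_def by (rule upv_unif)
    qed
    show "sum w T = 1"
    proof -
      have "sum w T = (\<Sum>x\<in>II. \<Sum>j\<in>UNIV. pp x * real (col x j) / real (k x))"
        unfolding T_def w_def by (simp add: sum.cartesian_product split_def)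
      also have "\<dots> = (\<Sum>x\<in>II. pp x / real (k x) * (\<Sum>j\<in>UNIV. real (col x j)))"
        by (simp add: sum_distrib_left)
      also have "\<dots> = (\<Sum>x\<in>II. pp x)"
      proof (rule sum.cong[OF refl])
        fix x assume x: "x \<in> II"
        have "(\<Sum>j\<in>UNIV. real (col x j)) = real (k x)"
          unfolding col_def using sum_row[of "supp (\<psi> x)"] Zk[OF x] by simp
        then show "pp x / real (k x) * (\<Sum>j\<in>UNIV. real (col x j)) = pp x" using kpos[OF x] by simp
      qed
      finally show ?thesis using p1 by simp
    qed
    show "ptrace_A R = (\<Sum>t\<in>T. w t *\<^sub>R outer (\<phi> t))"
    proof -
      have "ptrace_A R = (\<Sum>x\<in>II. pp x *\<^sub>R ptrace_A (outer (\<psi> x)))" by (simp add: R ptrace_A_sum)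
      also have "\<dots> = (\<Sum>x\<in>II. \<Sum>j\<in>UNIV. w (x, j) *\<^sub>R outer (\<phi> (x, j)))"
      proof (rule sum.cong[OF refl])
        fix x assume x: "x \<in> II"
        have "ptrace_A (outer (\<psi> x)) = ptrace_A (outer (upv (supp (\<psi> x)) (Z x)))"
          using arg_cong[OF Zeq[OF x], of "\<lambda>v. ptrace_A (outer v)"] by simp
        also have "\<dots> = (\<Sum>j\<in>UNIV. (real (col x j) / real (k x)) *\<^sub>R outer (\<phi> (x, j)))"
          unfolding ptrace_A_outer row_upv using Zk[OF x]
          by (simp add: outer_scaleR \<phi>_def col_def)
        finally show "pp x *\<^sub>R ptrace_A (outer (\<psi> x)) = (\<Sum>j\<in>UNIV. w (x, j) *\<^sub>R outer (\<phi> (x, j)))"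
          by (simp add: scaleR_sum_right w_def)
      qed
      also have "\<dots> = (\<Sum>t\<in>T. w t *\<^sub>R outer (\<phi> t))"
        unfolding T_def by (simp add: sum.cartesian_product split_def)
      finally show ?thesis .
    qed
  qed
  also have "(\<Sum>t\<in>T. w t * log 2 (real (kk t))) = (\<Sum>x\<in>II. pp x / real (k x) *
      (\<Sum>i\<in>UNIV. real (card {j. (i,j)\<in>supp (\<psi> x)}) * log 2 (real (card {j. (i,j)\<in>supp (\<psi> x)}))))"
    unfolding T_def w_def kk_def col_def by (simp add: sum.cartesian_product split_def sum_distrib_left mult_ac)
  finally show ?thesis .
qed


lemma colsum_nonneg: "0 \<le> (\<Sum>j\<in>(UNIV::'b::finite set). real (card (f j)) * log 2 (real (card (f j))))"
proof (intro sum_nonneg)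
  fix j
  show "0 \<le> real (card (f j)) * log 2 (real (card (f j)))"
  proof (cases "card (f j) = 0")
    case False
    then have "1 \<le> real (card (f j))" by linarith
    then have "0 \<le> log 2 (real (card (f j)))" by (subst zero_le_log_cancel_iff) auto
    then show ?thesis by simp
  qed simp
qed

lemma superadd:
  fixes R :: "complex^('a::finite\<times>'b::finite)^('a\<times>'b)"
  shows "CfU (ptrace_B R) + CfU (ptrace_A R) \<le> CfU R"
proof (rule CfU_lower)
  fix II :: "nat set" and pp \<psi> k
  assume G: "gdec R II pp \<psi> k"
  have nn: "\<And>x. x \<in> II \<Longrightarrow> 0 \<le> pp x" using G by (simp add: gdec_def)
  obtain Z where Z: "\<And>x. x \<in> II \<Longrightarrow> (\<forall>j. cmod (Z x $ j) = 1) \<and> \<psi> x = upv (supp (\<psi> x)) (Z x) \<and>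
     k x = card (supp (\<psi> x)) \<and> supp (\<psi> x) \<noteq> {}" using gdec_Z[OF G] by blast
  have Zk: "\<And>x. x \<in> II \<Longrightarrow> k x = card (supp (\<psi> x))" and Zne: "\<And>x. x \<in> II \<Longrightarrow> supp (\<psi> x) \<noteq> {}"
    using Z by blast+
  define XB where "XB = (\<Sum>x\<in>II. pp x / real (k x) *
      (\<Sum>j\<in>UNIV. real (card {i. (i,j)\<in>supp (\<psi> x)}) * log 2 (real (card {i. (i,j)\<in>supp (\<psi> x)}))))"
  define XA where "XA = (\<Sum>x\<in>II. pp x / real (k x) *
      (\<Sum>i\<in>UNIV. real (card {j. (i,j)\<in>supp (\<psi> x)}) * log 2 (real (card {j. (i,j)\<in>supp (\<psi> x)}))))"
  have XB0: "0 \<le> XB" unfolding XB_def using nn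
    by (intro sum_nonneg mult_nonneg_nonneg divide_nonneg_nonneg colsum_nonneg) auto
  have XA0: "0 \<le> XA" unfolding XA_def using nn
    by (intro sum_nonneg mult_nonneg_nonneg divide_nonneg_nonneg colsum_nonneg) auto
  have "CfU (ptrace_B R) + CfU (ptrace_A R) \<le> ennreal XB + ennreal XA"
    unfolding XB_def XA_def by (rule add_mono[OF ptrace_B_bound[OF G] ptrace_A_bound[OF G]])
  also have "\<dots> = ennreal (XB + XA)" using XB0 XA0 by (simp add: ennreal_plus)
  also have "\<dots> \<le> ennreal (gcost II pp k)"
  proof (rule ennreal_leI)
    have "XB + XA = (\<Sum>x\<in>II. pp x / real (k x) *
      ((\<Sum>j\<in>UNIV. real (card {i. (i,j)\<in>supp (\<psi> x)}) * log 2 (real (card {i. (i,j)\<in>supp (\<psi> x)})))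
      + (\<Sum>i\<in>UNIV. real (card {j. (i,j)\<in>supp (\<psi> x)}) * log 2 (real (card {j. (i,j)\<in>supp (\<psi> x)})))))"
      unfolding XB_def XA_def by (simp add: sum.distrib distrib_left)
    also have "\<dots> \<le> (\<Sum>x\<in>II. pp x / real (k x) * (real (card (supp (\<psi> x))) * log 2 (real (card (supp (\<psi> x))))))"
    proof (rule sum_mono)
      fix x assume x: "x \<in> II"
      show "pp x / real (k x) *
      ((\<Sum>j\<in>UNIV. real (card {i. (i,j)\<in>supp (\<psi> x)}) * log 2 (real (card {i. (i,j)\<in>supp (\<psi> x)})))
      + (\<Sum>i\<in>UNIV. real (card {j. (i,j)\<in>supp (\<psi> x)}) * log 2 (real (card {j. (i,j)\<in>supp (\<psi> x)}))))
        \<le> pp x / real (k x) * (real (card (supp (\<psi> x))) * log 2 (real (card (supp (\<psi> x)))))"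
        by (rule mult_left_mono[OF entropy_ineq]) (use nn[OF x] Zne[OF x] in auto)
    qed
    also have "\<dots> = gcost II pp k"
      unfolding gcost_def
    proof (rule sum.cong[OF refl])
      fix x assume x: "x \<in> II"
      have "real (k x) \<noteq> 0" using Zk[OF x] Zne[OF x] by (simp add: card_gt_0_iff)
      then show "pp x / real (k x) * (real (card (supp (\<psi> x))) * log 2 (real (card (supp (\<psi> x))))) = pp x * log 2 (real (k x))"
        using Zk[OF x] by simp
    qed
    finally show "XB + XA \<le> gcost II pp k" .
  qed
  finally show "CfU (ptrace_B R) + CfU (ptrace_A R) \<le> ennreal (gcost II pp k)" .
qed

definition tv :: "complex^'a::finite \<Rightarrow> complex^'b::finite \<Rightarrow> complex^('a\<times>'b)" where
  "tv u v = (\<chi> x. u $ fst x * v $ snd x)"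

lemma tensor_outer: "tensor (outer u) (outer v) = outer (tv u v)"
  by (simp add: vec_eq_iff tensor_def outer_def tv_def mult_ac)

lemma tensor_sum:
  "tensor (\<Sum>a\<in>I1. c a *\<^sub>R M a) (\<Sum>b\<in>I2. d b *\<^sub>R N b) =
   (\<Sum>x\<in>I1\<times>I2. (c (fst x) * d (snd x)) *\<^sub>R tensor (M (fst x)) (N (snd x)))"
proof -
  have e: "\<And>i k j l. (\<Sum>a\<in>I1. c a *\<^sub>R M a $ i $ k) * (\<Sum>b\<in>I2. d b *\<^sub>R N b $ j $ l) =
      (\<Sum>x\<in>I1\<times>I2. (c (fst x) * d (snd x)) *\<^sub>R (M (fst x) $ i $ k * N (snd x) $ j $ l))"
    by (simp add: sum_product sum.cartesian_product split_def mult.commute mult.left_commute)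
  show ?thesis by (simp add: vec_eq_iff tensor_def e)
qed

lemma tv_upv: "tv (upv J1 z1) (upv J2 z2) = upv (J1 \<times> J2) (tv z1 z2)"
proof -
  have s: "complex_of_real (sqrt (real (card J1))) * complex_of_real (sqrt (real (card J2))) =
    complex_of_real (sqrt (real (card J1) * real (card J2)))"
    by (simp add: real_sqrt_mult flip: of_real_mult)
  show ?thesis
    by (auto simp: vec_eq_iff tv_def upv_def card_cartesian_product simp flip: s)
qed

lemma tensor_bound:
  fixes \<rho> :: "complex^'a::finite^'a" and \<sigma> :: "complex^'b::finite^'b" and I1 :: "'i set" and I2 :: "'j set"
  assumes G1: "gdec \<rho> I1 p1 \<psi>1 k1" and G2: "gdec \<sigma> I2 p2 \<psi>2 k2"
  shows "CfU (tensor \<rho> \<sigma>) \<le> ennreal (gcost I1 p1 k1 + gcost I2 p2 k2)"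
proof -
  obtain Z1 where Z1: "\<And>x. x \<in> I1 \<Longrightarrow> (\<forall>j. cmod (Z1 x $ j) = 1) \<and> \<psi>1 x = upv (supp (\<psi>1 x)) (Z1 x) \<and>
     k1 x = card (supp (\<psi>1 x)) \<and> supp (\<psi>1 x) \<noteq> {}" using gdec_Z[OF G1] by blast
  obtain Z2 where Z2: "\<And>x. x \<in> I2 \<Longrightarrow> (\<forall>j. cmod (Z2 x $ j) = 1) \<and> \<psi>2 x = upv (supp (\<psi>2 x)) (Z2 x) \<and>
     k2 x = card (supp (\<psi>2 x)) \<and> supp (\<psi>2 x) \<noteq> {}" using gdec_Z[OF G2] by blast
  have f1: "finite I1" and n1: "\<And>x. x \<in> I1 \<Longrightarrow> 0 \<le> p1 x" and s1: "sum p1 I1 = 1"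
    and R1: "\<rho> = (\<Sum>x\<in>I1. p1 x *\<^sub>R outer (\<psi>1 x))" using G1 by (auto simp: gdec_def)
  have f2: "finite I2" and n2: "\<And>x. x \<in> I2 \<Longrightarrow> 0 \<le> p2 x" and s2: "sum p2 I2 = 1"
    and R2: "\<sigma> = (\<Sum>x\<in>I2. p2 x *\<^sub>R outer (\<psi>2 x))" using G2 by (auto simp: gdec_def)
  have k1p: "\<And>x. x \<in> I1 \<Longrightarrow> 0 < real (k1 x)" using Z1 by (simp add: card_gt_0_iff)
  have k2p: "\<And>x. x \<in> I2 \<Longrightarrow> 0 < real (k2 x)" using Z2 by (simp add: card_gt_0_iff)
  define T where "T = I1 \<times> I2"
  have fT: "finite T" using f1 f2 by (simp add: T_def)
  have "CfU (tensor \<rho> \<sigma>) \<le> ennreal (\<Sum>x\<in>T. (p1 (fst x) * p2 (snd x)) * log 2 (real (k1 (fst x) * k2 (snd x))))"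
  proof (rule gdec_build[OF fT])
    show "\<forall>t\<in>T. 0 \<le> p1 (fst t) * p2 (snd t)" using n1 n2 by (auto simp: T_def)
    show "\<forall>t\<in>T. p1 (fst t) * p2 (snd t) \<noteq> 0 \<longrightarrow> unif_coh (k1 (fst t) * k2 (snd t)) (tv (\<psi>1 (fst t)) (\<psi>2 (snd t)))"
    proof (intro ballI impI)
      fix t assume t: "t \<in> T"
      then have a: "fst t \<in> I1" and b: "snd t \<in> I2" by (auto simp: T_def)
      have "tv (\<psi>1 (fst t)) (\<psi>2 (snd t)) = tv (upv (supp (\<psi>1 (fst t))) (Z1 (fst t))) (upv (supp (\<psi>2 (snd t))) (Z2 (snd t)))"
        using Z1[OF a] Z2[OF b] by metis
      also have "\<dots> = upv (supp (\<psi>1 (fst t)) \<times> supp (\<psi>2 (snd t))) (tv (Z1 (fst t)) (Z2 (snd t)))"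
        by (rule tv_upv)
      finally have e: "tv (\<psi>1 (fst t)) (\<psi>2 (snd t)) = upv (supp (\<psi>1 (fst t)) \<times> supp (\<psi>2 (snd t))) (tv (Z1 (fst t)) (Z2 (snd t)))" .
      have n: "\<forall>j. cmod (tv (Z1 (fst t)) (Z2 (snd t)) $ j) = 1" using Z1[OF a] Z2[OF b] by (simp add: tv_def norm_mult)
      have ne: "supp (\<psi>1 (fst t)) \<times> supp (\<psi>2 (snd t)) \<noteq> {}" using Z1[OF a] Z2[OF b] by blast
      have kk: "k1 (fst t) * k2 (snd t) = card (supp (\<psi>1 (fst t)) \<times> supp (\<psi>2 (snd t)))"
        using Z1[OF a] Z2[OF b] by (simp add: card_cartesian_product)
      show "unif_coh (k1 (fst t) * k2 (snd t)) (tv (\<psi>1 (fst t)) (\<psi>2 (snd t)))"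
        unfolding e kk by (rule upv_unif[OF ne n])
    qed
    show "(\<Sum>t\<in>T. p1 (fst t) * p2 (snd t)) = 1"
      using s1 s2 by (simp add: T_def sum.cartesian_product' flip: sum_distrib_left sum_distrib_right)
    show "tensor \<rho> \<sigma> = (\<Sum>t\<in>T. (p1 (fst t) * p2 (snd t)) *\<^sub>R outer (tv (\<psi>1 (fst t)) (\<psi>2 (snd t))))"
      unfolding R1 R2 tensor_sum T_def tensor_outer ..
  qed
  also have "(\<Sum>x\<in>T. (p1 (fst x) * p2 (snd x)) * log 2 (real (k1 (fst x) * k2 (snd x)))) = gcost I1 p1 k1 + gcost I2 p2 k2"
  proof -
    have "(\<Sum>x\<in>T. (p1 (fst x) * p2 (snd x)) * log 2 (real (k1 (fst x) * k2 (snd x))))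
       = (\<Sum>a\<in>I1. \<Sum>b\<in>I2. p2 b * (p1 a * log 2 (real (k1 a))) + p1 a * (p2 b * log 2 (real (k2 b))))"
      unfolding T_def sum.cartesian_product'
      by (intro sum.cong refl) (use k1p k2p in \<open>simp add: log_mult algebra_simps\<close>)
    also have "\<dots> = gcost I1 p1 k1 + gcost I2 p2 k2"
      using s1 s2 by (simp add: sum.distrib gcost_def sum_distrib_left[symmetric] sum_distrib_right[symmetric]
          sum.swap[of _ I1 I2])
    finally show ?thesis .
  qed
  finally show ?thesis .
qed


lemma CfU_close:
  assumes "CfU \<rho> < top" "0 < e"
  obtains I :: "nat set" and p \<psi> k where "gdec \<rho> I p \<psi> k" "ennreal (gcost I p k) < CfU \<rho> + ennreal e"
proof -
  have "CfU \<rho> < CfU \<rho> + ennreal e" using assms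
    by (cases "CfU \<rho>" rule: ennreal_cases) (auto simp flip: ennreal_plus simp: ennreal_less_iff)
  from CfU_less[OF this] show ?thesis using that by blast
qed

lemma tensor_le:
  fixes \<rho> :: "complex^'a::finite^'a" and \<sigma> :: "complex^'b::finite^'b"
  shows "CfU (tensor \<rho> \<sigma>) \<le> CfU \<rho> + CfU \<sigma>"
proof (rule ennreal_le_epsilon)
  fix e :: real assume top: "CfU \<rho> + CfU \<sigma> < top" and e: "0 < e"
  have t1: "CfU \<rho> < top" and t2: "CfU \<sigma> < top" using top by (auto simp: top.not_eq_extremum)
  have e2: "0 < e / 2" using e by simp
  obtain I1 :: "nat set" and p1 \<psi>1 k1 where G1: "gdec \<rho> I1 p1 \<psi>1 k1" and c1: "ennreal (gcost I1 p1 k1) < CfU \<rho> + ennreal (e/2)"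
    using CfU_close[OF t1 e2] by blast
  obtain I2 :: "nat set" and p2 \<psi>2 k2 where G2: "gdec \<sigma> I2 p2 \<psi>2 k2" and c2: "ennreal (gcost I2 p2 k2) < CfU \<sigma> + ennreal (e/2)"
    using CfU_close[OF t2 e2] by blast
  have "CfU (tensor \<rho> \<sigma>) \<le> ennreal (gcost I1 p1 k1 + gcost I2 p2 k2)" by (rule tensor_bound[OF G1 G2])
  also have "\<dots> = ennreal (gcost I1 p1 k1) + ennreal (gcost I2 p2 k2)"
    using gcost_nonneg[OF G1] gcost_nonneg[OF G2] by (simp add: ennreal_plus)
  also have "\<dots> \<le> (CfU \<rho> + ennreal (e/2)) + (CfU \<sigma> + ennreal (e/2))"
    using c1 c2 by (intro add_mono) auto
  also have "\<dots> = CfU \<rho> + CfU \<sigma> + ennreal e"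
  proof -
    have "ennreal (e/2) + ennreal (e/2) = ennreal e" using e by (simp flip: ennreal_plus)
    then show ?thesis by (metis add.assoc add.commute add.left_commute)
  qed
  finally show "CfU (tensor \<rho> \<sigma>) \<le> CfU \<rho> + CfU \<sigma> + ennreal e" .
qed

lemma ptrace_B_tensor: "trace \<sigma> = 1 \<Longrightarrow> ptrace_B (tensor \<rho> \<sigma>) = \<rho>"
  by (simp add: vec_eq_iff ptrace_B_def tensor_def trace_def flip: sum_distrib_left)

lemma ptrace_A_tensor: "trace \<rho> = 1 \<Longrightarrow> ptrace_A (tensor \<rho> \<sigma>) = \<sigma>"
  by (simp add: vec_eq_iff ptrace_A_def tensor_def trace_def flip: sum_distrib_right)

lemma tensor_add:
  fixes \<rho> :: "complex^'a::finite^'a" and \<sigma> :: "complex^'b::finite^'b"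
  assumes "is_state \<rho>" "is_state \<sigma>"
  shows "CfU (tensor \<rho> \<sigma>) = CfU \<rho> + CfU \<sigma>"
proof (rule antisym)
  show "CfU (tensor \<rho> \<sigma>) \<le> CfU \<rho> + CfU \<sigma>" by (rule tensor_le)
  have "trace \<rho> = 1" "trace \<sigma> = 1" using assms by (auto simp: is_state_def)
  then show "CfU \<rho> + CfU \<sigma> \<le> CfU (tensor \<rho> \<sigma>)"
    using superadd[of "tensor \<rho> \<sigma>"] by (simp add: ptrace_B_tensor ptrace_A_tensor)
qed


definition Zset :: "(complex^'n) set" where "Zset = {z. \<forall>j. cmod (z $ j) = 1}"

lemma compact_Zset: "compact (Zset :: (complex^'n) set)"
proof -
  have cl: "closed (Zset :: (complex^'n) set)"
    unfolding Zset_def by (simp add: Collect_all_eq closed_INT closed_Collect_eq continuous_intros)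
  have "norm z \<le> real CARD('n)" if "z \<in> (Zset :: (complex^'n) set)" for z
  proof -
    have "norm z = L2_set (\<lambda>i. norm (z $ i)) UNIV" by (simp add: norm_vec_def)
    also have "\<dots> \<le> (\<Sum>i\<in>UNIV. norm (z $ i))" by (rule L2_set_le_sum) auto
    also have "\<dots> = real CARD('n)" using that by (simp add: Zset_def)
    finally show ?thesis .
  qed
  then have "bounded (Zset :: (complex^'n) set)" unfolding bounded_iff by blast
  with cl show ?thesis by (simp add: compact_eq_bounded_closed)
qed

lemma upv_nth: "upv J z $ i = z $ i * (if i \<in> J then inverse (complex_of_real (sqrt (real (card J)))) else 0)"
  by (simp add: upv_def divide_inverse)

definition Oset :: "'n set \<Rightarrow> (complex^'n^'n) set" where
  "Oset J = (\<lambda>z. outer (upv J z)) ` Zset"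

lemma cont_outer_upv: "continuous_on S (\<lambda>z. outer (upv J (z::complex^'n)))"
  unfolding outer_def upv_nth
  by (intro continuous_on_vec_lambda continuous_intros)

lemma compact_Oset: "compact (Oset J)"
  unfolding Oset_def by (rule compact_continuous_image[OF cont_outer_upv compact_Zset])

definition Cset :: "'n set \<Rightarrow> (complex^'n^'n) set" where
  "Cset J = convex hull (Oset J)"

lemma compact_Cset: "compact (Cset J)"
  unfolding Cset_def by (rule compact_convex_hull[OF compact_Oset])

definition TT :: "'n set \<Rightarrow> (real \<times> (complex^'n^'n)) set" where
  "TT J = (\<lambda>p. (fst p, fst p *\<^sub>R snd p)) ` ({0..1} \<times> Cset J)"

lemma compact_TT: "compact (TT J)"
  unfolding TT_def
  by (rule compact_continuous_image) (auto intro!: continuous_intros compact_Times compact_Cset)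

lemma multi_subseq:
  fixes f :: "nat \<Rightarrow> 'k \<Rightarrow> 'a::metric_space"
  assumes "finite F" "\<forall>J\<in>F. compact (K J)" "\<forall>m. \<forall>J\<in>F. f m J \<in> K J"
  shows "\<exists>r l. strict_mono r \<and> (\<forall>J\<in>F. l J \<in> K J \<and> (\<lambda>m. f (r m) J) \<longlonglongrightarrow> l J)"
  using assms
proof (induction F rule: finite_induct)
  case empty
  show ?case by (intro exI[of _ id]) (auto simp: strict_mono_def)
next
  case (insert J F)
  then obtain r l where r: "strict_mono r" and l: "\<forall>J\<in>F. l J \<in> K J \<and> (\<lambda>m. f (r m) J) \<longlonglongrightarrow> l J"
    by blast
  have "seq_compact (K J)" using insert.prems by (simp add: compact_imp_seq_compact)
  moreover have "\<forall>m. (\<lambda>m. f (r m) J) m \<in> K J" using insert.prems by simp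
  ultimately obtain l0 r2 where l0: "l0 \<in> K J" and r2: "strict_mono r2"
    and lim: "((\<lambda>m. f (r m) J) \<circ> r2) \<longlonglongrightarrow> l0"
    by (rule seq_compactE)
  have "\<forall>J'\<in>insert J F. (l(J := l0)) J' \<in> K J' \<and> (\<lambda>m. f ((r \<circ> r2) m) J') \<longlonglongrightarrow> (l(J := l0)) J'"
  proof
    fix J' assume J': "J' \<in> insert J F"
    show "(l(J := l0)) J' \<in> K J' \<and> (\<lambda>m. f ((r \<circ> r2) m) J') \<longlonglongrightarrow> (l(J := l0)) J'"
    proof (cases "J' = J")
      case True
      then show ?thesis using l0 lim by (simp add: o_def)
    next
      case False
      then have "J' \<in> F" using J' by simp
      then have "l J' \<in> K J'" "(\<lambda>m. f (r m) J') \<longlonglongrightarrow> l J'" using l by auto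
      moreover from LIMSEQ_subseq_LIMSEQ[OF this(2) r2]
      have "(\<lambda>m. f ((r \<circ> r2) m) J') \<longlonglongrightarrow> l J'" by (simp add: o_def)
      ultimately show ?thesis using False by simp
    qed
  qed
  moreover have "strict_mono (r \<circ> r2)" using r r2 by (rule strict_mono_o)
  ultimately show ?case by blast
qed


lemma Oset_mem: "J \<noteq> {} \<Longrightarrow> unif_coh k \<psi> \<Longrightarrow> supp \<psi> = J \<Longrightarrow> outer \<psi> \<in> Oset J"
proof -
  assume J: "J \<noteq> {}" and u: "unif_coh k \<psi>" and s: "supp \<psi> = J"
  obtain z where z: "\<forall>j. cmod (z $ j) = 1" "\<psi> = upv (supp \<psi>) z" using unif_cohE[OF u] by blast
  have "\<psi> = upv J z" using z(2) unfolding s .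
  then have e: "outer \<psi> = (\<lambda>z. outer (upv J z)) z" by simp
  have "z \<in> Zset" using z(1) by (simp add: Zset_def)
  with e show "outer \<psi> \<in> Oset J" unfolding Oset_def by (rule image_eqI)
qed

lemma Cset_ne: "Oset J \<subseteq> Cset J" "Oset J \<noteq> {}"
proof -
  show "Oset J \<subseteq> Cset J" unfolding Cset_def by (rule hull_subset)
  have "(\<chi> j. 1) \<in> (Zset :: (complex^'a) set)" by (simp add: Zset_def)
  then show "Oset J \<noteq> {}" unfolding Oset_def by blast
qed

lemma group_dec:
  fixes X :: "complex^'n^'n" and I :: "nat set"
  assumes G: "gdec X I p \<psi> k"
  shows "\<exists>W M. (\<forall>J\<in>{J. J \<noteq> {}}. (W J, M J) \<in> TT J) \<and> sum W {J. J \<noteq> {}} = 1 \<and>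
     (\<Sum>J\<in>{J. J \<noteq> {}}. M J) = X \<and> (\<Sum>J\<in>{J. J \<noteq> {}}. W J * log 2 (real (card J))) = gcost I p k"
proof -
  define F :: "'n set set" where "F = {J. J \<noteq> {}}"
  have fF: "finite F" by simp
  have fin: "finite I" and nn: "\<And>x. x \<in> I \<Longrightarrow> 0 \<le> p x" and p1: "sum p I = 1"
    and X: "X = (\<Sum>x\<in>I. p x *\<^sub>R outer (\<psi> x))" and uc: "\<And>x. x \<in> I \<Longrightarrow> unif_coh (k x) (\<psi> x)"
    using G by (auto simp: gdec_def)
  have kx: "\<And>x. x \<in> I \<Longrightarrow> k x = card (supp (\<psi> x)) \<and> supp (\<psi> x) \<noteq> {}"
    using uc unif_coh_supp(1,2) by blast
  have gF: "(\<lambda>x. supp (\<psi> x)) ` I \<subseteq> F" using kx by (auto simp: F_def)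
  define W where "W J = sum p {x\<in>I. supp (\<psi> x) = J}" for J
  define M where "M J = (\<Sum>x\<in>{x\<in>I. supp (\<psi> x) = J}. p x *\<^sub>R outer (\<psi> x))" for J
  have sW: "sum W F = 1" unfolding W_def using sum.group[OF fin fF gF, of p] p1 by simp
  have sM: "(\<Sum>J\<in>F. M J) = X" unfolding M_def X using sum.group[OF fin fF gF, of "\<lambda>x. p x *\<^sub>R outer (\<psi> x)"] by simp
  have cost: "(\<Sum>J\<in>F. W J * log 2 (real (card J))) = gcost I p k"
  proof -
    have "(\<Sum>J\<in>F. W J * log 2 (real (card J))) = (\<Sum>J\<in>F. \<Sum>x\<in>{x\<in>I. supp (\<psi> x) = J}. p x * log 2 (real (k x)))"
      unfolding W_def sum_distrib_right by (intro sum.cong refl) (use kx in auto)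
    also have "\<dots> = gcost I p k" unfolding gcost_def by (rule sum.group[OF fin fF gF])
    finally show ?thesis .
  qed
  have mem: "(W J, M J) \<in> TT J" if J: "J \<in> F" for J
  proof -
    define Fi where "Fi = {x\<in>I. supp (\<psi> x) = J}"
    have fFi: "finite Fi" using fin by (simp add: Fi_def)
    have W0: "0 \<le> W J" unfolding W_def using nn by (auto intro: sum_nonneg)
    have W1: "W J \<le> 1" unfolding W_def p1[symmetric] by (rule sum_mono2[OF fin]) (use nn in auto)
    have Oin: "outer (\<psi> x) \<in> Cset J" if x: "x \<in> Fi" for x
    proof -
      have "x \<in> I" "supp (\<psi> x) = J" using x by (auto simp: Fi_def)
      moreover have "J \<noteq> {}" using J by (simp add: F_def)
      ultimately have "outer (\<psi> x) \<in> Oset J" using Oset_mem uc by blast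
      then show ?thesis using Cset_ne(1) by blast
    qed
    have MFi: "M J = (\<Sum>x\<in>Fi. p x *\<^sub>R outer (\<psi> x))" by (simp add: M_def Fi_def)
    have WFi: "W J = sum p Fi" by (simp add: W_def Fi_def)
    have nFi: "\<forall>x\<in>Fi. 0 \<le> p x" using nn by (simp add: Fi_def)
    show ?thesis
    proof (cases "W J = 0")
      case True
      then have "sum p Fi = 0" using WFi by simp
      then have z: "\<forall>x\<in>Fi. p x = 0" using sum_nonneg_eq_0_iff[OF fFi] nFi by blast
      have M0: "M J = 0" unfolding MFi using z by simp
      obtain N where N: "N \<in> Cset J" using Cset_ne by blast
      have e: "(W J, M J) = (\<lambda>q. (fst q, fst q *\<^sub>R snd q)) (0::real, N)" using True M0 by simp
      have "(0::real, N) \<in> {0..1} \<times> Cset J" using N by simp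
      with e show ?thesis unfolding TT_def by (rule image_eqI)
    next
      case False
      then have Wp: "0 < W J" using W0 by simp
      define N where "N = (\<Sum>x\<in>Fi. (p x / W J) *\<^sub>R outer (\<psi> x))"
      have NC: "N \<in> Cset J" unfolding N_def
      proof (rule convex_sum[OF fFi])
        show "convex (Cset J)" unfolding Cset_def by (rule convex_convex_hull)
        show "(\<Sum>x\<in>Fi. p x / W J) = 1" using Wp unfolding WFi by (simp flip: sum_divide_distrib)
        show "\<And>x. x \<in> Fi \<Longrightarrow> 0 \<le> p x / W J" using nFi Wp by auto
        show "\<And>x. x \<in> Fi \<Longrightarrow> outer (\<psi> x) \<in> Cset J" by (rule Oin)
      qed
      have "W J *\<^sub>R N = (\<Sum>x\<in>Fi. (W J * (p x / W J)) *\<^sub>R outer (\<psi> x))"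
        unfolding N_def by (simp add: scaleR_sum_right)
      also have "\<dots> = M J" unfolding MFi using Wp by (intro sum.cong refl) simp
      finally have e: "(W J, M J) = (\<lambda>q. (fst q, fst q *\<^sub>R snd q)) (W J, N)" by simp
      have "(W J, N) \<in> {0..1} \<times> Cset J" using NC W0 W1 by simp
      with e show ?thesis unfolding TT_def by (rule image_eqI)
    qed
  qed
  show ?thesis using mem sW sM cost unfolding F_def by blast
qed


lemma ungroup:
  fixes \<rho> :: "complex^'n^'n" and w :: "'n set \<Rightarrow> real" and Mx :: "'n set \<Rightarrow> complex^'n^'n"
  assumes mem: "\<forall>J\<in>{J. J \<noteq> {}}. (w J, Mx J) \<in> TT J" and w1: "sum w {J. J \<noteq> {}} = 1"
    and rho: "\<rho> = (\<Sum>J\<in>{J. J \<noteq> {}}. Mx J)"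
  shows "CfU \<rho> \<le> ennreal (\<Sum>J\<in>{J. J \<noteq> {}}. w J * log 2 (real (card J)))"
proof -
  define F :: "'n set set" where "F = {J. J \<noteq> {}}"
  have fF: "finite F" by simp
  have "\<forall>J\<in>F. \<exists>N. N \<in> Cset J \<and> 0 \<le> w J \<and> Mx J = w J *\<^sub>R N"
  proof
    fix J assume "J \<in> F"
    then have "(w J, Mx J) \<in> TT J" using mem by (simp add: F_def)
    then obtain q where q: "q \<in> {0..1} \<times> Cset J" "(w J, Mx J) = (fst q, fst q *\<^sub>R snd q)"
      unfolding TT_def by blast
    then show "\<exists>N. N \<in> Cset J \<and> 0 \<le> w J \<and> Mx J = w J *\<^sub>R N"
      by (intro exI[of _ "snd q"]) (auto simp: mem_Times_iff)
  qed
  then obtain N where N: "\<forall>J\<in>F. N J \<in> Cset J \<and> 0 \<le> w J \<and> Mx J = w J *\<^sub>R N J"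
    by (rule bchoice[elim_format]) blast
  have "\<forall>J\<in>F. \<exists>Su. finite (fst Su) \<and> fst Su \<subseteq> Oset J \<and> (\<forall>x\<in>fst Su. 0 \<le> snd Su x) \<and>
      sum (snd Su) (fst Su) = 1 \<and> (\<Sum>v\<in>fst Su. snd Su v *\<^sub>R v) = N J"
  proof
    fix J assume "J \<in> F"
    then have "N J \<in> convex hull (Oset J)" using N by (simp add: Cset_def)
    then obtain S u where "finite S" "S \<subseteq> Oset J" "\<forall>x\<in>S. 0 \<le> u x" "sum u S = 1" "(\<Sum>v\<in>S. u v *\<^sub>R v) = N J"
      unfolding convex_hull_explicit by blast
    then show "\<exists>Su. finite (fst Su) \<and> fst Su \<subseteq> Oset J \<and> (\<forall>x\<in>fst Su. 0 \<le> snd Su x) \<and>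
      sum (snd Su) (fst Su) = 1 \<and> (\<Sum>v\<in>fst Su. snd Su v *\<^sub>R v) = N J"
      by (intro exI[of _ "(S, u)"]) simp
  qed
  then obtain Su :: "'n set \<Rightarrow> (complex^'n^'n) set \<times> (complex^'n^'n \<Rightarrow> real)" where
    Su: "\<forall>J\<in>F. finite (fst (Su J)) \<and> fst (Su J) \<subseteq> Oset J \<and> (\<forall>x\<in>fst (Su J). 0 \<le> snd (Su J) x) \<and>
      sum (snd (Su J)) (fst (Su J)) = 1 \<and> (\<Sum>v\<in>fst (Su J). snd (Su J) v *\<^sub>R v) = N J"
    by (rule bchoice[elim_format]) blast
  define S where "S J = fst (Su J)" for J
  define u where "u J = snd (Su J)" for J
  have fS: "\<And>J. J \<in> F \<Longrightarrow> finite (S J)" and SO: "\<And>J. J \<in> F \<Longrightarrow> S J \<subseteq> Oset J"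
    and un: "\<And>J x. J \<in> F \<Longrightarrow> x \<in> S J \<Longrightarrow> 0 \<le> u J x" and u1: "\<And>J. J \<in> F \<Longrightarrow> sum (u J) (S J) = 1"
    and uN: "\<And>J. J \<in> F \<Longrightarrow> (\<Sum>v\<in>S J. u J v *\<^sub>R v) = N J"
    using Su by (auto simp: S_def u_def)
  define zz :: "'n set \<Rightarrow> complex^'n^'n \<Rightarrow> complex^'n" where "zz J v = (SOME z. z \<in> Zset \<and> v = outer (upv J z))" for J v
  have zz: "zz J v \<in> Zset \<and> v = outer (upv J (zz J v))" if "J \<in> F" "v \<in> S J" for J v
  proof -
    have "v \<in> Oset J" using SO that by blast
    then obtain z where "z \<in> Zset" "v = outer (upv J z)" unfolding Oset_def by blast
    then have "z \<in> Zset \<and> v = outer (upv J z)" by blast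
    then show ?thesis unfolding zz_def by (rule someI)
  qed
  define T where "T = Sigma F S"
  have fT: "finite T" using fF fS by (simp add: T_def)
  have wn: "\<And>J. J \<in> F \<Longrightarrow> 0 \<le> w J" using N by blast
  have "CfU \<rho> \<le> ennreal (\<Sum>t\<in>T. (w (fst t) * u (fst t) (snd t)) * log 2 (real (card (fst t))))"
  proof (rule gdec_build[OF fT])
    show "\<forall>t\<in>T. 0 \<le> w (fst t) * u (fst t) (snd t)" using wn un by (auto simp: T_def)
    show "\<forall>t\<in>T. w (fst t) * u (fst t) (snd t) \<noteq> 0 \<longrightarrow> unif_coh (card (fst t)) (upv (fst t) (zz (fst t) (snd t)))"
    proof (intro ballI impI)
      fix t assume t: "t \<in> T"
      then have a: "fst t \<in> F" "snd t \<in> S (fst t)" by (auto simp: T_def)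
      then have "zz (fst t) (snd t) \<in> Zset" using zz by blast
      then show "unif_coh (card (fst t)) (upv (fst t) (zz (fst t) (snd t)))"
        using a(1) by (intro upv_unif) (auto simp: F_def Zset_def)
    qed
    show "(\<Sum>t\<in>T. w (fst t) * u (fst t) (snd t)) = 1"
    proof -
      have "(\<Sum>t\<in>T. w (fst t) * u (fst t) (snd t)) = (\<Sum>J\<in>F. \<Sum>v\<in>S J. w J * u J v)"
        unfolding T_def by (subst sum.Sigma) (use fF fS in \<open>auto simp: split_def\<close>)
      also have "\<dots> = (\<Sum>J\<in>F. w J)" by (intro sum.cong refl) (simp add: u1 flip: sum_distrib_left)
      finally show ?thesis using w1 by (simp add: F_def)
    qed
    show "\<rho> = (\<Sum>t\<in>T. (w (fst t) * u (fst t) (snd t)) *\<^sub>R outer (upv (fst t) (zz (fst t) (snd t))))"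
    proof -
      have "(\<Sum>t\<in>T. (w (fst t) * u (fst t) (snd t)) *\<^sub>R outer (upv (fst t) (zz (fst t) (snd t))))
          = (\<Sum>J\<in>F. \<Sum>v\<in>S J. (w J * u J v) *\<^sub>R outer (upv J (zz J v)))"
        unfolding T_def by (subst sum.Sigma) (use fF fS in \<open>auto simp: split_def\<close>)
      also have "\<dots> = (\<Sum>J\<in>F. \<Sum>v\<in>S J. (w J * u J v) *\<^sub>R v)"
      proof (intro sum.cong refl)
        fix J v assume "J \<in> F" "v \<in> S J"
        then have "v = outer (upv J (zz J v))" using zz by blast
        then show "(w J * u J v) *\<^sub>R outer (upv J (zz J v)) = (w J * u J v) *\<^sub>R v" by simp
      qed
      also have "\<dots> = (\<Sum>J\<in>F. w J *\<^sub>R N J)"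
        by (intro sum.cong refl) (simp add: uN[symmetric] scaleR_sum_right)
      also have "\<dots> = (\<Sum>J\<in>F. Mx J)" using N by (intro sum.cong refl) simp
      finally show ?thesis using rho by (simp add: F_def)
    qed
  qed
  also have "(\<Sum>t\<in>T. (w (fst t) * u (fst t) (snd t)) * log 2 (real (card (fst t)))) =
      (\<Sum>J\<in>{J. J \<noteq> {}}. w J * log 2 (real (card J)))"
  proof -
    have "(\<Sum>t\<in>T. (w (fst t) * u (fst t) (snd t)) * log 2 (real (card (fst t)))) =
        (\<Sum>J\<in>F. \<Sum>v\<in>S J. (w J * u J v) * log 2 (real (card J)))"
      unfolding T_def by (subst sum.Sigma) (use fF fS in \<open>auto simp: split_def\<close>)
    also have "\<dots> = (\<Sum>J\<in>F. w J * log 2 (real (card J)))"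
    proof (intro sum.cong refl)
      fix J assume J: "J \<in> F"
      have "(\<Sum>v\<in>S J. (w J * u J v) * log 2 (real (card J))) = sum (u J) (S J) * (w J * log 2 (real (card J)))"
        unfolding sum_distrib_right by (intro sum.cong refl) (simp add: mult_ac)
      then show "(\<Sum>v\<in>S J. (w J * u J v) * log 2 (real (card J))) = w J * log 2 (real (card J))"
        using u1[OF J] by simp
    qed
    finally show ?thesis by (simp add: F_def)
  qed
  finally show ?thesis .
qed


lemma lsc_core:
  fixes X :: "nat \<Rightarrow> complex^'n^'n"
  assumes lim: "X \<longlonglongrightarrow> \<rho>" and bd: "\<forall>m. CfU (X m) < ennreal c"
  shows "CfU \<rho> \<le> ennreal c"
proof -
  define F :: "'n set set" where "F = {J. J \<noteq> {}}"
  have fF: "finite F" by simp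
  have "\<forall>m. \<exists>WM :: ('n set \<Rightarrow> real) \<times> ('n set \<Rightarrow> complex^'n^'n).
      (\<forall>J\<in>F. (fst WM J, snd WM J) \<in> TT J) \<and> sum (fst WM) F = 1 \<and> (\<Sum>J\<in>F. snd WM J) = X m \<and>
      (\<Sum>J\<in>F. fst WM J * log 2 (real (card J))) < c"
  proof
    fix m
    obtain I :: "nat set" and p \<psi> k where G: "gdec (X m) I p \<psi> k" and lt: "ennreal (gcost I p k) < ennreal c"
      using CfU_less[OF bd[rule_format, of m]] by blast
    have gc: "gcost I p k < c" using lt gcost_nonneg[OF G] by (simp add: ennreal_less_iff)
    obtain W M where WM: "\<forall>J\<in>{J. J \<noteq> {}}. (W J, M J) \<in> TT J" "sum W {J. J \<noteq> {}} = 1"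
      "(\<Sum>J\<in>{J. J \<noteq> {}}. M J) = X m" "(\<Sum>J\<in>{J. J \<noteq> {}}. W J * log 2 (real (card J))) = gcost I p k"
      using group_dec[OF G] by blast
    show "\<exists>WM :: ('n set \<Rightarrow> real) \<times> ('n set \<Rightarrow> complex^'n^'n).
      (\<forall>J\<in>F. (fst WM J, snd WM J) \<in> TT J) \<and> sum (fst WM) F = 1 \<and> (\<Sum>J\<in>F. snd WM J) = X m \<and>
      (\<Sum>J\<in>F. fst WM J * log 2 (real (card J))) < c"
      by (intro exI[of _ "(W, M)"]) (use WM gc in \<open>simp add: F_def\<close>)
  qed
  from choice[OF this] obtain WM :: "nat \<Rightarrow> ('n set \<Rightarrow> real) \<times> ('n set \<Rightarrow> complex^'n^'n)" where
    WM: "\<And>m. (\<forall>J\<in>F. (fst (WM m) J, snd (WM m) J) \<in> TT J) \<and> sum (fst (WM m)) F = 1 \<and>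
      (\<Sum>J\<in>F. snd (WM m) J) = X m \<and> (\<Sum>J\<in>F. fst (WM m) J * log 2 (real (card J))) < c"
    by blast
  define f where "f m J = (fst (WM m) J, snd (WM m) J)" for m J
  have "\<exists>r l. strict_mono r \<and> (\<forall>J\<in>F. l J \<in> TT J \<and> (\<lambda>m. f (r m) J) \<longlonglongrightarrow> l J)"
    by (rule multi_subseq[OF fF]) (use WM in \<open>auto simp: compact_TT f_def\<close>)
  then obtain r l where r: "strict_mono r" and l: "\<And>J. J \<in> F \<Longrightarrow> l J \<in> TT J"
    and lf: "\<And>J. J \<in> F \<Longrightarrow> (\<lambda>m. f (r m) J) \<longlonglongrightarrow> l J" by blast
  have limW: "(\<lambda>m. fst (WM (r m)) J) \<longlonglongrightarrow> fst (l J)" if "J \<in> F" for J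
    using tendsto_fst[OF lf[OF that]] by (simp add: f_def)
  have limM: "(\<lambda>m. snd (WM (r m)) J) \<longlonglongrightarrow> snd (l J)" if "J \<in> F" for J
    using tendsto_snd[OF lf[OF that]] by (simp add: f_def)
  have s1: "(\<lambda>m. \<Sum>J\<in>F. fst (WM (r m)) J) \<longlonglongrightarrow> (\<Sum>J\<in>F. fst (l J))"
    by (rule tendsto_sum) (rule limW)
  have "(\<lambda>m. \<Sum>J\<in>F. fst (WM (r m)) J) = (\<lambda>m. 1)" using WM by simp
  then have w1: "(\<Sum>J\<in>F. fst (l J)) = 1" using s1 LIMSEQ_unique[OF _ tendsto_const] by metis
  have s2: "(\<lambda>m. \<Sum>J\<in>F. snd (WM (r m)) J) \<longlonglongrightarrow> (\<Sum>J\<in>F. snd (l J))"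
    by (rule tendsto_sum) (rule limM)
  have "(\<lambda>m. \<Sum>J\<in>F. snd (WM (r m)) J) = (\<lambda>m. X (r m))" using WM by simp
  moreover have "(\<lambda>m. X (r m)) \<longlonglongrightarrow> \<rho>" using LIMSEQ_subseq_LIMSEQ[OF lim r] by (simp add: o_def)
  ultimately have rho: "\<rho> = (\<Sum>J\<in>F. snd (l J))" using s2 LIMSEQ_unique by metis
  have s3: "(\<lambda>m. \<Sum>J\<in>F. fst (WM (r m)) J * log 2 (real (card J))) \<longlonglongrightarrow> (\<Sum>J\<in>F. fst (l J) * log 2 (real (card J)))"
    by (intro tendsto_sum tendsto_mult_right limW)
  have cle: "(\<Sum>J\<in>F. fst (l J) * log 2 (real (card J))) \<le> c"
    by (rule LIMSEQ_le_const2[OF s3]) (use WM in \<open>auto intro: less_imp_le\<close>)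
  have "CfU \<rho> \<le> ennreal (\<Sum>J\<in>{J. J \<noteq> {}}. fst (l J) * log 2 (real (card J)))"
  proof (rule ungroup)
    show "\<forall>J\<in>{J. J \<noteq> {}}. (fst (l J), snd (l J)) \<in> TT J" using l by (simp add: F_def)
    show "sum (\<lambda>J. fst (l J)) {J. J \<noteq> {}} = 1" using w1 by (simp add: F_def)
    show "\<rho> = (\<Sum>J\<in>{J. J \<noteq> {}}. snd (l J))" using rho by (simp add: F_def)
  qed
  also have "\<dots> \<le> ennreal c" using cle by (intro ennreal_leI) (simp add: F_def)
  finally show ?thesis .
qed

lemma lsc:
  fixes X :: "nat \<Rightarrow> complex^'n^'n"
  assumes lim: "X \<longlonglongrightarrow> \<rho>"
  shows "CfU \<rho> \<le> liminf (\<lambda>m. CfU (X m))"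
proof (rule ennreal_le_epsilon)
  fix e :: real assume top: "liminf (\<lambda>m. CfU (X m)) < top" and e: "0 < e"
  define L where "L = liminf (\<lambda>m. CfU (X m))"
  obtain l where l: "L = ennreal l" "0 \<le> l" using top unfolding L_def by (cases "liminf (\<lambda>m. CfU (X m))") auto
  obtain r where r: "strict_mono r" "((\<lambda>m. CfU (X m)) \<circ> r) \<longlonglongrightarrow> L"
    using liminf_subseq_lim unfolding L_def by blast
  have "L < ennreal (l + e)" using e l by (simp add: ennreal_less_iff)
  from order_tendstoD(2)[OF r(2) this] obtain N where N: "\<And>m. m \<ge> N \<Longrightarrow> CfU (X (r m)) < ennreal (l + e)"
    unfolding eventually_sequentially by auto
  define s where "s m = r (m + N)" for m
  have s: "strict_mono s" using r(1) by (simp add: strict_mono_def s_def)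
  have "(\<lambda>m. X (s m)) \<longlonglongrightarrow> \<rho>" using LIMSEQ_subseq_LIMSEQ[OF lim s] by (simp add: o_def)
  moreover have "\<forall>m. CfU (X (s m)) < ennreal (l + e)" using N by (simp add: s_def)
  ultimately have "CfU \<rho> \<le> ennreal (l + e)" by (rule lsc_core)
  also have "\<dots> = L + ennreal e" using l e by (simp add: ennreal_plus)
  finally show "CfU \<rho> \<le> liminf (\<lambda>m. CfU (X m)) + ennreal e" by (simp add: L_def)
qed


theorem proposition3:
  shows
  \<comment> \<open>(a1) convexity\<close>
  "(\<forall>(S::nat set) (p::nat \<Rightarrow> real) (\<rho>s::nat \<Rightarrow> complex^'n^'n).
      finite S \<and> (\<forall>i\<in>S. 0 \<le> p i \<and> is_state (\<rho>s i)) \<and> sum p S = 1 \<longrightarrow>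
      CfU (\<Sum>i\<in>S. p i *\<^sub>R \<rho>s i) \<le> (\<Sum>i\<in>S. ennreal (p i) * CfU (\<rho>s i)))
   \<and>
   \<comment> \<open>(a2) strong monotonicity under PIO\<close>
   (\<forall>(\<rho>::complex^'n^'n) (A::nat set) (p::nat \<Rightarrow> real) (B::nat \<Rightarrow> nat set)
       (I::nat \<Rightarrow> nat \<Rightarrow> 'n set) (U::nat \<Rightarrow> nat \<Rightarrow> complex^'n^'n).
      is_state \<rho> \<and> finite A \<and> (\<forall>a\<in>A. 0 \<le> p a) \<and> sum p A = 1 \<and>
      (\<forall>a\<in>A. finite (B a) \<and> (\<forall>i. \<exists>!b. b \<in> B a \<and> i \<in> I a b)) \<and>
      (\<forall>a\<in>A. \<forall>b\<in>B a. incoh_unitary (U a b)) \<longrightarrow>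
      (let q = (\<lambda>a b. Re (trace (\<rho> ** incoh_proj (I a b))));
           K = (\<lambda>a b. U a b ** incoh_proj (I a b) ** \<rho> ** incoh_proj (I a b) ** adj (U a b));
           mid = (\<Sum>a\<in>A. \<Sum>b\<in>{b\<in>B a. q a b \<noteq> 0}.
                    ennreal (p a * q a b) * CfU ((1 / q a b) *\<^sub>R K a b))
       in CfU (\<Sum>a\<in>A. \<Sum>b\<in>B a. p a *\<^sub>R K a b) \<le> mid \<and> mid \<le> CfU \<rho>))
   \<and>
   \<comment> \<open>(b) superadditivity\<close>
   (\<forall>\<rho>AB::complex^('a\<times>'b)^('a\<times>'b). is_state \<rho>AB \<longrightarrow>
      CfU (ptrace_B \<rho>AB) + CfU (ptrace_A \<rho>AB) \<le> CfU \<rho>AB)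
   \<and>
   \<comment> \<open>(c) additivity on tensor products\<close>
   (\<forall>(\<rho>A::complex^'a^'a) (\<sigma>B::complex^'b^'b). is_state \<rho>A \<and> is_state \<sigma>B \<longrightarrow>
      CfU (tensor \<rho>A \<sigma>B) = CfU \<rho>A + CfU \<sigma>B)
   \<and>
   \<comment> \<open>(d) lower semicontinuity (on the set of states)\<close>
   (\<forall>(\<rho>::complex^'n^'n) (X::nat \<Rightarrow> complex^'n^'n).
      is_state \<rho> \<and> (\<forall>m. is_state (X m)) \<and> X \<longlonglongrightarrow> \<rho> \<longrightarrow>
      CfU \<rho> \<le> liminf (\<lambda>m. CfU (X m)))"
proof (intro conjI)
  show "\<forall>(S::nat set) (p::nat \<Rightarrow> real) (\<rho>s::nat \<Rightarrow> complex^'n^'n).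
      finite S \<and> (\<forall>i\<in>S. 0 \<le> p i \<and> is_state (\<rho>s i)) \<and> sum p S = 1 \<longrightarrow>
      CfU (\<Sum>i\<in>S. p i *\<^sub>R \<rho>s i) \<le> (\<Sum>i\<in>S. ennreal (p i) * CfU (\<rho>s i))"
  proof (intro allI impI)
    fix S :: "nat set" and p :: "nat \<Rightarrow> real" and \<rho>s :: "nat \<Rightarrow> complex^'n^'n"
    assume h: "finite S \<and> (\<forall>i\<in>S. 0 \<le> p i \<and> is_state (\<rho>s i)) \<and> sum p S = 1"
    show "CfU (\<Sum>i\<in>S. p i *\<^sub>R \<rho>s i) \<le> (\<Sum>i\<in>S. ennreal (p i) * CfU (\<rho>s i))"
      by (rule CfU_convex) (use h in auto)
  qed
  show "\<forall>(\<rho>::complex^'n^'n) (A::nat set) (p::nat \<Rightarrow> real) (B::nat \<Rightarrow> nat set)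
       (I::nat \<Rightarrow> nat \<Rightarrow> 'n set) (U::nat \<Rightarrow> nat \<Rightarrow> complex^'n^'n).
      is_state \<rho> \<and> finite A \<and> (\<forall>a\<in>A. 0 \<le> p a) \<and> sum p A = 1 \<and>
      (\<forall>a\<in>A. finite (B a) \<and> (\<forall>i. \<exists>!b. b \<in> B a \<and> i \<in> I a b)) \<and>
      (\<forall>a\<in>A. \<forall>b\<in>B a. incoh_unitary (U a b)) \<longrightarrow>
      (let q = (\<lambda>a b. Re (trace (\<rho> ** incoh_proj (I a b))));
           K = (\<lambda>a b. U a b ** incoh_proj (I a b) ** \<rho> ** incoh_proj (I a b) ** adj (U a b));
           mid = (\<Sum>a\<in>A. \<Sum>b\<in>{b\<in>B a. q a b \<noteq> 0}.
                    ennreal (p a * q a b) * CfU ((1 / q a b) *\<^sub>R K a b))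
       in CfU (\<Sum>a\<in>A. \<Sum>b\<in>B a. p a *\<^sub>R K a b) \<le> mid \<and> mid \<le> CfU \<rho>)"
  proof (intro allI impI)
    fix \<rho> :: "complex^'n^'n" and A :: "nat set" and p :: "nat \<Rightarrow> real" and B :: "nat \<Rightarrow> nat set"
       and I :: "nat \<Rightarrow> nat \<Rightarrow> 'n set" and U :: "nat \<Rightarrow> nat \<Rightarrow> complex^'n^'n"
    assume h: "is_state \<rho> \<and> finite A \<and> (\<forall>a\<in>A. 0 \<le> p a) \<and> sum p A = 1 \<and>
      (\<forall>a\<in>A. finite (B a) \<and> (\<forall>i. \<exists>!b. b \<in> B a \<and> i \<in> I a b)) \<and>
      (\<forall>a\<in>A. \<forall>b\<in>B a. incoh_unitary (U a b))"
    show "let q = (\<lambda>a b. Re (trace (\<rho> ** incoh_proj (I a b))));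
           K = (\<lambda>a b. U a b ** incoh_proj (I a b) ** \<rho> ** incoh_proj (I a b) ** adj (U a b));
           mid = (\<Sum>a\<in>A. \<Sum>b\<in>{b\<in>B a. q a b \<noteq> 0}.
                    ennreal (p a * q a b) * CfU ((1 / q a b) *\<^sub>R K a b))
       in CfU (\<Sum>a\<in>A. \<Sum>b\<in>B a. p a *\<^sub>R K a b) \<le> mid \<and> mid \<le> CfU \<rho>"
      using h by (intro pio_main) auto
  qed
  show "\<forall>\<rho>AB::complex^('a\<times>'b)^('a\<times>'b). is_state \<rho>AB \<longrightarrow>
      CfU (ptrace_B \<rho>AB) + CfU (ptrace_A \<rho>AB) \<le> CfU \<rho>AB"
    using superadd by blast
  show "\<forall>(\<rho>A::complex^'a^'a) (\<sigma>B::complex^'b^'b). is_state \<rho>A \<and> is_state \<sigma>B \<longrightarrow>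
      CfU (tensor \<rho>A \<sigma>B) = CfU \<rho>A + CfU \<sigma>B"
    using tensor_add by blast
  show "\<forall>(\<rho>::complex^'n^'n) (X::nat \<Rightarrow> complex^'n^'n).
      is_state \<rho> \<and> (\<forall>m. is_state (X m)) \<and> X \<longlonglongrightarrow> \<rho> \<longrightarrow>
      CfU \<rho> \<le> liminf (\<lambda>m. CfU (X m))"
    using lsc by blast
qed


end
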